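(* Any strongly regular Weingarten surface in $\mathbb R^3$ admits locally geometric principal parameters.
   Context: For a surface $x=x(u,v)$ without umbilical points parameterized by principal parameters ($F=M=0$, with $E,F,G$, $L,M,N$ the coefficients of the first and second fundamental forms): $\nu_1=L/E$, $\nu_2=N/G$, $\gamma_1=-\frac{E_v}{2E\sqrt G}$, $\gamma_2=\frac{G_u}{2G\sqrt E}$. The surface is strongly regular if $(\nu_1-\nu_2)\gamma_1\gamma_2\neq0$, with the convention $\nu_1-\nu_2>0$. A strongly regular surface is Weingarten if there exist differentiable $f(\nu),g(\nu)$, $\nu\in\mathcal I\subseteq\mathbb R$, with $f-g>0$, $f'g'\neq0$, and a differentiable $\nu(u,v)\in\mathcal I$ with $\nu_u\nu_v\neq0$, such that $\nu_1=f(\nu)$, $\nu_2=g(\nu)$. With $\Phi$ an antiderivative of $f'/(f-g)$ and $\Psi$ an antiderivative of $g'/(g-f)$, put $\lambda=\ln\sqrt E+\Phi(\nu)$ and $\mu=\ln\sqrt G+\Psi(\nu)$ (one always has $\lambda_v=0$, $\mu_u=0$). Principal parameters $(u,v)$ on a strongly regular Weingarten surface are called geometric principal parameters if $\lambda$ and $\mu$ are constants. *)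

theory Defs
  imports "HOL-Analysis.Analysis"
begin

definition pu :: "(real \<Rightarrow> real \<Rightarrow> 'a::real_normed_vector) \<Rightarrow> real \<Rightarrow> real \<Rightarrow> 'a" where
  "pu f u v = vector_derivative (\<lambda>s. f s v) (at u)"

definition pv :: "(real \<Rightarrow> real \<Rightarrow> 'a::real_normed_vector) \<Rightarrow> real \<Rightarrow> real \<Rightarrow> 'a" where
  "pv f u v = vector_derivative (\<lambda>t. f u t) (at v)"

fun Ck_on :: "nat \<Rightarrow> (real \<times> real) set \<Rightarrow> (real \<Rightarrow> real \<Rightarrow> 'a::real_normed_vector) \<Rightarrow> bool" where
  "Ck_on 0 D f = continuous_on D (\<lambda>(u,v). f u v)"
| "Ck_on (Suc k) D f =
     (continuous_on D (\<lambda>(u,v). f u v) \<and>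
      (\<forall>(u,v)\<in>D. ((\<lambda>s. f s v) has_vector_derivative pu f u v) (at u) \<and>
                 ((\<lambda>t. f u t) has_vector_derivative pv f u v) (at v)) \<and>
      Ck_on k D (pu f) \<and> Ck_on k D (pv f))"

definition smooth_on2 :: "(real \<times> real) set \<Rightarrow> (real \<Rightarrow> real \<Rightarrow> 'a::real_normed_vector) \<Rightarrow> bool" where
  "smooth_on2 D f \<longleftrightarrow> (\<forall>k. Ck_on k D f)"

type_synonym surf = "real \<Rightarrow> real \<Rightarrow> real^3"

definition fE :: "surf \<Rightarrow> real \<Rightarrow> real \<Rightarrow> real" where
  "fE x u v = pu x u v \<bullet> pu x u v"
definition fF :: "surf \<Rightarrow> real \<Rightarrow> real \<Rightarrow> real" where
  "fF x u v = pu x u v \<bullet> pv x u v"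
definition fG :: "surf \<Rightarrow> real \<Rightarrow> real \<Rightarrow> real" where
  "fG x u v = pv x u v \<bullet> pv x u v"

definition unit_normal :: "surf \<Rightarrow> real \<Rightarrow> real \<Rightarrow> real^3" where
  "unit_normal x u v = (1 / norm (cross3 (pu x u v) (pv x u v))) *\<^sub>R cross3 (pu x u v) (pv x u v)"

definition fL :: "surf \<Rightarrow> real \<Rightarrow> real \<Rightarrow> real" where
  "fL x u v = pu (pu x) u v \<bullet> unit_normal x u v"
definition fM :: "surf \<Rightarrow> real \<Rightarrow> real \<Rightarrow> real" where
  "fM x u v = pv (pu x) u v \<bullet> unit_normal x u v"
definition fN :: "surf \<Rightarrow> real \<Rightarrow> real \<Rightarrow> real" where
  "fN x u v = pv (pv x) u v \<bullet> unit_normal x u v"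

definition nu1 :: "surf \<Rightarrow> real \<Rightarrow> real \<Rightarrow> real" where
  "nu1 x u v = fL x u v / fE x u v"
definition nu2 :: "surf \<Rightarrow> real \<Rightarrow> real \<Rightarrow> real" where
  "nu2 x u v = fN x u v / fG x u v"
definition gamma1 :: "surf \<Rightarrow> real \<Rightarrow> real \<Rightarrow> real" where
  "gamma1 x u v = - pv (fE x) u v / (2 * fE x u v * sqrt (fG x u v))"
definition gamma2 :: "surf \<Rightarrow> real \<Rightarrow> real \<Rightarrow> real" where
  "gamma2 x u v = pu (fG x) u v / (2 * fG x u v * sqrt (fE x u v))"

definition regular_surface :: "(real \<times> real) set \<Rightarrow> surf \<Rightarrow> bool" where
  "regular_surface D x \<longleftrightarrow> open D \<and> smooth_on2 D x \<and>
     (\<forall>(u,v)\<in>D. cross3 (pu x u v) (pv x u v) \<noteq> 0)"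

definition principal_params :: "(real \<times> real) set \<Rightarrow> surf \<Rightarrow> bool" where
  "principal_params D x \<longleftrightarrow> (\<forall>(u,v)\<in>D. fF x u v = 0 \<and> fM x u v = 0)"

text \<open>Strongly regular, with the convention nu1 - nu2 > 0.\<close>
definition strongly_regular :: "(real \<times> real) set \<Rightarrow> surf \<Rightarrow> bool" where
  "strongly_regular D x \<longleftrightarrow>
     (\<forall>(u,v)\<in>D. (nu1 x u v - nu2 x u v) * gamma1 x u v * gamma2 x u v \<noteq> 0 \<and>
                nu1 x u v - nu2 x u v > 0)"

definition weingarten_data ::
  "(real \<times> real) set \<Rightarrow> surf \<Rightarrow> real set \<Rightarrow> (real \<Rightarrow> real) \<Rightarrow> (real \<Rightarrow> real)
     \<Rightarrow> (real \<Rightarrow> real \<Rightarrow> real) \<Rightarrow> bool" where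
  "weingarten_data D x I f g nu \<longleftrightarrow>
     open I \<and>
     (\<forall>t\<in>I. f differentiable (at t) \<and> g differentiable (at t) \<and>
             f t - g t > 0 \<and> deriv f t * deriv g t \<noteq> 0) \<and>
     (\<lambda>(u,v). nu u v) differentiable_on D \<and>
     (\<forall>(u,v)\<in>D. nu u v \<in> I \<and> pu nu u v * pv nu u v \<noteq> 0 \<and>
                nu1 x u v = f (nu u v) \<and> nu2 x u v = g (nu u v))"

definition lam :: "surf \<Rightarrow> (real \<Rightarrow> real) \<Rightarrow> (real \<Rightarrow> real \<Rightarrow> real) \<Rightarrow> real \<Rightarrow> real \<Rightarrow> real" where
  "lam x Phi nu u v = ln (sqrt (fE x u v)) + Phi (nu u v)"
definition mu :: "surf \<Rightarrow> (real \<Rightarrow> real) \<Rightarrow> (real \<Rightarrow> real \<Rightarrow> real) \<Rightarrow> real \<Rightarrow> real \<Rightarrow> real" where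
  "mu x Psi nu u v = ln (sqrt (fG x u v)) + Psi (nu u v)"

definition geometric_params ::
  "(real \<times> real) set \<Rightarrow> surf \<Rightarrow> (real \<Rightarrow> real) \<Rightarrow> (real \<Rightarrow> real) \<Rightarrow> (real \<Rightarrow> real \<Rightarrow> real) \<Rightarrow> bool" where
  "geometric_params D x Phi Psi nu \<longleftrightarrow>
     (\<exists>c. \<forall>(u,v)\<in>D. lam x Phi nu u v = c) \<and> (\<exists>d. \<forall>(u,v)\<in>D. mu x Psi nu u v = d)"

definition param_change ::
  "(real \<times> real) set \<Rightarrow> (real \<times> real) set \<Rightarrow> (real \<Rightarrow> real \<Rightarrow> real) \<Rightarrow> (real \<Rightarrow> real \<Rightarrow> real) \<Rightarrow> bool" where
  "param_change V U p q \<longleftrightarrow>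
     open V \<and> open U \<and> smooth_on2 V p \<and> smooth_on2 V q \<and>
     bij_betw (\<lambda>(s,t). (p s t, q s t)) V U \<and>
     (\<exists>P Q. smooth_on2 U P \<and> smooth_on2 U Q \<and>
        (\<forall>(u,v)\<in>U. (P u v, Q u v) \<in> V \<and> p (P u v) (Q u v) = u \<and> q (P u v) (Q u v) = v))"

end

theory Submission
  imports Defs
begin

lemma Ck_on_cont: "Ck_on k D f \<Longrightarrow> continuous_on D (\<lambda>(u,v). f u v)"
  by (cases k) auto

lemma Ck_SucI:
  assumes "continuous_on D (\<lambda>(u,v). f u v)"
    "\<And>u v. (u,v) \<in> D \<Longrightarrow> ((\<lambda>s. f s v) has_vector_derivative pu f u v) (at u)"
    "\<And>u v. (u,v) \<in> D \<Longrightarrow> ((\<lambda>t. f u t) has_vector_derivative pv f u v) (at v)"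
    "Ck_on k D (pu f)" "Ck_on k D (pv f)"
  shows "Ck_on (Suc k) D f"
  using assms by auto

lemma Ck_SucD:
  assumes "Ck_on (Suc k) D f"
  shows "continuous_on D (\<lambda>(u,v). f u v)"
    "\<And>u v. (u,v) \<in> D \<Longrightarrow> ((\<lambda>s. f s v) has_vector_derivative pu f u v) (at u)"
    "\<And>u v. (u,v) \<in> D \<Longrightarrow> ((\<lambda>t. f u t) has_vector_derivative pv f u v) (at v)"
    "Ck_on k D (pu f)" "Ck_on k D (pv f)"
  using assms by auto

declare Ck_on.simps(2)[simp del]

lemma Ck_on_Suc_imp: "Ck_on (Suc k) D f \<Longrightarrow> Ck_on k D f"
proof (induction k arbitrary: f)
  case 0 then show ?case by (simp add: Ck_on_cont)
next
  case (Suc k)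
  note d = Ck_SucD[OF Suc.prems]
  show ?case
    by (rule Ck_SucI) (use d Suc.IH in auto)
qed

lemma Ck_on_mono: "Ck_on m D f \<Longrightarrow> k \<le> m \<Longrightarrow> Ck_on k D f"
proof (induction m)
  case 0 then show ?case by simp
next
  case (Suc m) then show ?case using Ck_on_Suc_imp le_Suc_eq by blast
qed

lemma pu_cong:
  assumes "open D" "\<forall>(u,v)\<in>D. f u v = g u v" "(u,v) \<in> D"
  shows "pu f u v = pu g u v"
proof -
  obtain e where e: "e > 0" "ball (u,v) e \<subseteq> D" using assms openE by blast
  have ev: "\<forall>\<^sub>F s in nhds u. f s v = g s v"
    unfolding eventually_nhds
    apply (rule exI[of _ "ball u e"])
    using e assms(2) by (auto simp: dist_Pair_Pair dist_commute subset_iff)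
  show ?thesis unfolding pu_def
    by (rule vector_derivative_cong_eq[where A=UNIV]) (use ev in \<open>auto elim: eventually_mono\<close>)
qed

lemma pv_cong:
  assumes "open D" "\<forall>(u,v)\<in>D. f u v = g u v" "(u,v) \<in> D"
  shows "pv f u v = pv g u v"
proof -
  obtain e where e: "e > 0" "ball (u,v) e \<subseteq> D" using assms openE by blast
  have ev: "\<forall>\<^sub>F t in nhds v. f u t = g u t"
    unfolding eventually_nhds
    apply (rule exI[of _ "ball v e"])
    using e assms(2) by (auto simp: dist_Pair_Pair dist_commute subset_iff)
  show ?thesis unfolding pv_def
    by (rule vector_derivative_cong_eq[where A=UNIV]) (use ev in \<open>auto elim: eventually_mono\<close>)
qed

lemma open_slice1: "open (D::(real\<times>real) set) \<Longrightarrow> open {s. (s,v) \<in> D}"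
proof -
  assume "open D"
  moreover have "continuous_on UNIV (\<lambda>s::real. (s,v))" by (intro continuous_intros)
  ultimately have "open ((\<lambda>s. (s,v)) -` D)" by (intro open_vimage) auto
  then show ?thesis by (simp add: vimage_def)
qed

lemma open_slice2: "open (D::(real\<times>real) set) \<Longrightarrow> open {t. (u,t) \<in> D}"
proof -
  assume "open D"
  moreover have "continuous_on UNIV (\<lambda>t::real. (u,t))" by (intro continuous_intros)
  ultimately have "open ((\<lambda>t. (u,t)) -` D)" by (intro open_vimage) auto
  then show ?thesis by (simp add: vimage_def)
qed

lemma cont_cong2:
  assumes "\<forall>(u,v)\<in>D. f u v = g u v" "continuous_on D (\<lambda>(u,v). f u v)"
  shows "continuous_on D (\<lambda>(u,v). g u v)"
  by (rule continuous_on_eq[OF assms(2)]) (use assms(1) in auto)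

lemma Ck_on_cong:
  assumes "open D" "\<forall>(u,v)\<in>D. f u v = g u v" "Ck_on k D f"
  shows "Ck_on k D g"
  using assms(2,3)
proof (induction k arbitrary: f g)
  case 0
  then show ?case using cont_cong2 by auto
next
  case (Suc k)
  note d = Ck_SucD[OF Suc.prems(2)]
  have pe: "\<forall>(u,v)\<in>D. pu f u v = pu g u v" "\<forall>(u,v)\<in>D. pv f u v = pv g u v"
    using pu_cong[OF assms(1) Suc.prems(1)] pv_cong[OF assms(1) Suc.prems(1)] by auto
  show ?case
  proof (rule Ck_SucI)
    show "continuous_on D (\<lambda>(u,v). g u v)"
      using d(1) cont_cong2 Suc.prems(1) by blast
    fix u v assume uv: "(u,v) \<in> D"
    have e1: "pu g u v = pu f u v" "pv g u v = pv f u v" using pe uv by auto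
    show "((\<lambda>s. g s v) has_vector_derivative pu g u v) (at u)"
      unfolding e1
      by (rule has_vector_derivative_transform_within_open[OF d(2)[OF uv] open_slice1[OF assms(1)]])
        (use uv Suc.prems(1) in auto)
    show "((\<lambda>t. g u t) has_vector_derivative pv g u v) (at v)"
      unfolding e1
      by (rule has_vector_derivative_transform_within_open[OF d(3)[OF uv] open_slice2[OF assms(1)]])
        (use uv Suc.prems(1) in auto)
  next
    show "Ck_on k D (pu g)" by (rule Suc.IH[OF _ d(4)]) (use pe in auto)
    show "Ck_on k D (pv g)" by (rule Suc.IH[OF _ d(5)]) (use pe in auto)
  qed
qed

lemma Ck_on_const: "Ck_on k D (\<lambda>u v. c)"
proof (induction k)
  case 0 then show ?case by (simp add: continuous_on_const)
next
  case (Suc k)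
  have "pu (\<lambda>u v. c) = (\<lambda>u v. 0)" "pv (\<lambda>u v. c) = (\<lambda>u v. 0)"
    by (auto simp: pu_def pv_def fun_eq_iff)
  moreover have "Ck_on k D (\<lambda>u v. 0::'a)"
  proof (induction k)
    case 0 then show ?case by (simp add: continuous_on_const)
  next
    case (Suc k)
    have "pu (\<lambda>u v. 0::'a) = (\<lambda>u v. 0)" "pv (\<lambda>u v. 0::'a) = (\<lambda>u v. 0)"
      by (auto simp: pu_def pv_def fun_eq_iff)
    then show ?case using Suc by (intro Ck_SucI) (auto simp: continuous_on_const)
  qed
  ultimately show ?case by (intro Ck_SucI) (auto simp: continuous_on_const)
qed

lemma Ck_SucI':
  assumes "open D" "continuous_on D (\<lambda>(u,v). f u v)"
    "\<And>u v. (u,v) \<in> D \<Longrightarrow> ((\<lambda>s. f s v) has_vector_derivative fu u v) (at u)"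
    "\<And>u v. (u,v) \<in> D \<Longrightarrow> ((\<lambda>t. f u t) has_vector_derivative fv u v) (at v)"
    "Ck_on k D fu" "Ck_on k D fv"
  shows "Ck_on (Suc k) D f"
proof -
  have e: "\<forall>(u,v)\<in>D. fu u v = pu f u v" "\<forall>(u,v)\<in>D. fv u v = pv f u v"
    using assms(3,4) by (auto simp: pu_def pv_def vector_derivative_at[symmetric])
  show ?thesis
    apply (rule Ck_SucI[OF assms(2)])
    using assms(3,4) e apply (metis (mono_tags, lifting) case_prodD)
    using assms(3,4) e apply (metis (mono_tags, lifting) case_prodD)
    using Ck_on_cong[OF assms(1) e(1) assms(5)] Ck_on_cong[OF assms(1) e(2) assms(6)] by auto
qed

lemma Ck_on_add:
  assumes "open D" "Ck_on k D a" "Ck_on k D b"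
  shows "Ck_on k D (\<lambda>u v. a u v + b u v)"
  using assms(2,3)
proof (induction k arbitrary: a b)
  case 0 then show ?case by (auto intro!: continuous_on_add simp: split_beta)
next
  case (Suc k)
  note da = Ck_SucD[OF Suc.prems(1)] and db = Ck_SucD[OF Suc.prems(2)]
  show ?case
    apply (rule Ck_SucI'[OF assms(1), where fu="\<lambda>u v. pu a u v + pu b u v" and fv="\<lambda>u v. pv a u v + pv b u v"])
    using da(1) db(1) apply (auto intro!: continuous_on_add simp: split_beta)[1]
    using da db apply (auto intro!: has_vector_derivative_add)[2]
    using Suc.IH da db by auto
qed

lemma Ck_on_neg:
  assumes "open D" "Ck_on k D a"
  shows "Ck_on k D (\<lambda>u v. - a u v)"
  using assms(2)
proof (induction k arbitrary: a)
  case 0 then show ?case by (auto intro!: continuous_on_minus simp: split_beta)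
next
  case (Suc k)
  note da = Ck_SucD[OF Suc.prems(1)]
  show ?case
    apply (rule Ck_SucI'[OF assms(1), where fu="\<lambda>u v. - pu a u v" and fv="\<lambda>u v. - pv a u v"])
    using da(1) apply (auto intro!: continuous_on_minus simp: split_beta)[1]
    using da apply (auto intro!: has_vector_derivative_minus)[2]
    using Suc.IH da by auto
qed

lemma Ck_on_diff:
  assumes "open D" "Ck_on k D a" "Ck_on k D b"
  shows "Ck_on k D (\<lambda>u v. a u v - b u v)"
  using Ck_on_add[OF assms(1,2) Ck_on_neg[OF assms(1,3)]] by simp

lemma Ck_on_bilinear:
  assumes bb: "bounded_bilinear bop" and "open D" "Ck_on k D a" "Ck_on k D b"
  shows "Ck_on k D (\<lambda>u v. bop (a u v) (b u v))"
  using assms(3,4)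
proof (induction k arbitrary: a b)
  case 0 then show ?case
    using bounded_bilinear.continuous_on[OF bb, of D "\<lambda>(u,v). a u v" "\<lambda>(u,v). b u v"]
    by (auto simp: split_beta)
next
  case (Suc k)
  note da = Ck_SucD[OF Suc.prems(1)] and db = Ck_SucD[OF Suc.prems(2)]
  have ak: "Ck_on k D a" "Ck_on k D b" using Suc.prems Ck_on_Suc_imp by blast+
  show ?case
    apply (rule Ck_SucI'[OF assms(2), where fu="\<lambda>u v. bop (a u v) (pu b u v) + bop (pu a u v) (b u v)"
          and fv="\<lambda>u v. bop (a u v) (pv b u v) + bop (pv a u v) (b u v)"])
    using bounded_bilinear.continuous_on[OF bb, of D "\<lambda>(u,v). a u v" "\<lambda>(u,v). b u v"] da(1) db(1)
      apply (auto simp: split_beta)[1]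
    using da db apply (auto intro!: bounded_bilinear.has_vector_derivative[OF bb])[2]
    using Suc.IH da db ak by (auto intro!: Ck_on_add[OF assms(2)])
qed



lemma Ck_on_mult:
  assumes "open D" "Ck_on k D a" "Ck_on k D b"
  shows "Ck_on k D (\<lambda>u v. a u v * (b u v :: real))"
  by (rule Ck_on_bilinear[OF bounded_bilinear_mult assms])

lemma Ck_on_scaleR:
  assumes "open D" "Ck_on k D a" "Ck_on k D b"
  shows "Ck_on k D (\<lambda>u v. a u v *\<^sub>R b u v)"
  by (rule Ck_on_bilinear[OF bounded_bilinear_scaleR assms])

lemma Ck_on_inner:
  assumes "open D" "Ck_on k D a" "Ck_on k D b"
  shows "Ck_on k D (\<lambda>u v. inner (a u v) (b u v :: 'a::real_inner))"
  by (rule Ck_on_bilinear[OF bounded_bilinear_inner assms])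

lemma real_vd: "((f::real\<Rightarrow>real) has_vector_derivative d) F \<longleftrightarrow> (f has_real_derivative d) F"
  by (simp add: has_real_derivative_iff_has_vector_derivative)

lemma Ck_on_inverse:
  assumes "open D" "Ck_on k D h" "\<forall>(u,v)\<in>D. h u v \<noteq> (0::real)"
  shows "Ck_on k D (\<lambda>u v. inverse (h u v))"
  using assms(2)
proof (induction k)
  case 0 then show ?case using assms(3)
    by (auto intro!: continuous_on_inverse simp: split_beta)
next
  case (Suc k)
  note d = Ck_SucD[OF Suc.prems(1)]
  have hk: "Ck_on k D h" using Suc.prems Ck_on_Suc_imp by blast
  show ?case
    apply (rule Ck_SucI'[OF assms(1), where fu="\<lambda>u v. - (inverse (h u v) * pu h u v * inverse (h u v))"
          and fv="\<lambda>u v. - (inverse (h u v) * pv h u v * inverse (h u v))"])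
    using d(1) assms(3) apply (auto intro!: continuous_on_inverse simp: split_beta)[1]
    using d assms(3) apply (auto simp: real_vd intro!: DERIV_inverse')[2]
    using Suc.IH[OF hk] d(4,5) by (auto intro!: Ck_on_neg Ck_on_mult assms(1))
qed

lemma Ck_on_sqrt:
  assumes "open D" "Ck_on k D h" "\<forall>(u,v)\<in>D. h u v > (0::real)"
  shows "Ck_on k D (\<lambda>u v. sqrt (h u v))"
  using assms(2)
proof (induction k)
  case 0 then show ?case using assms(3)
    by (auto intro!: continuous_on_real_sqrt simp: split_beta)
next
  case (Suc k)
  note d = Ck_SucD[OF Suc.prems(1)]
  have hk: "Ck_on k D h" using Suc.prems Ck_on_Suc_imp by blast
  have s1: "Ck_on k D (\<lambda>u v. inverse (sqrt (h u v)))"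
    by (rule Ck_on_inverse[OF assms(1) Suc.IH[OF hk]]) (use assms(3) in auto)
  show ?case
    apply (rule Ck_SucI'[OF assms(1), where fu="\<lambda>u v. (inverse 2 * inverse (sqrt (h u v))) * pu h u v"
          and fv="\<lambda>u v. (inverse 2 * inverse (sqrt (h u v))) * pv h u v"])
    using d(1) assms(3) apply (auto intro!: continuous_on_real_sqrt simp: split_beta)[1]
    using d assms(3) apply (auto simp: real_vd intro!: derivative_eq_intros)[2]
    subgoal by (rule Ck_on_mult[OF assms(1) Ck_on_mult[OF assms(1) Ck_on_const s1] d(4)])
    subgoal by (rule Ck_on_mult[OF assms(1) Ck_on_mult[OF assms(1) Ck_on_const s1] d(5)])
    done
qed

lemma Ck_on_ln:
  assumes "open D" "Ck_on k D h" "\<forall>(u,v)\<in>D. h u v > (0::real)"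
  shows "Ck_on k D (\<lambda>u v. ln (h u v))"
  using assms(2)
proof (cases k)
  case 0 then show ?thesis using assms(2,3)
    by (auto intro!: continuous_on_ln simp: split_beta)
next
  case (Suc k)
  note d = Ck_SucD[OF assms(2)[unfolded Suc]]
  have hk: "Ck_on k D h" using assms(2) Suc Ck_on_Suc_imp by blast
  have s1: "Ck_on k D (\<lambda>u v. inverse (h u v))"
    by (rule Ck_on_inverse[OF assms(1) hk]) (use assms(3) in auto)
  show ?thesis unfolding Suc
    apply (rule Ck_SucI'[OF assms(1), where fu="\<lambda>u v. inverse (h u v) * pu h u v"
          and fv="\<lambda>u v. inverse (h u v) * pv h u v"])
    using d(1) assms(3) apply (auto intro!: continuous_on_ln simp: split_beta)[1]
    using d assms(3) apply (auto simp: real_vd divide_inverse mult.commute intro!: derivative_eq_intros)[2]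
    subgoal by (rule Ck_on_mult[OF assms(1) s1 d(4)])
    subgoal by (rule Ck_on_mult[OF assms(1) s1 d(5)])
    done
qed

lemma Ck_on_exp:
  assumes "open D" "Ck_on k D h"
  shows "Ck_on k D (\<lambda>u v. exp (h u v :: real))"
  using assms(2)
proof (induction k)
  case 0 then show ?case
    by (auto intro!: continuous_on_exp simp: split_beta)
next
  case (Suc k)
  note d = Ck_SucD[OF Suc.prems(1)]
  have hk: "Ck_on k D h" using Suc.prems Ck_on_Suc_imp by blast
  show ?case
    apply (rule Ck_SucI'[OF assms(1), where fu="\<lambda>u v. exp (h u v) * pu h u v"
          and fv="\<lambda>u v. exp (h u v) * pv h u v"])
    using d(1) apply (auto intro!: continuous_on_exp simp: split_beta)[1]
    using d apply (auto simp: real_vd intro!: derivative_eq_intros)[2]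
    using Suc.IH[OF hk] d(4,5) by (auto intro!: Ck_on_mult assms(1))
qed

lemma Ck_on_divide:
  assumes "open D" "Ck_on k D a" "Ck_on k D h" "\<forall>(u,v)\<in>D. h u v \<noteq> (0::real)"
  shows "Ck_on k D (\<lambda>u v. a u v / h u v)"
  using Ck_on_mult[OF assms(1,2) Ck_on_inverse[OF assms(1,3,4)]] by (simp add: divide_inverse)

lemma Ck_on_comp:
  assumes "open U" "open V" "Ck_on k U g" "Ck_on k V (\<lambda>s t. a s)" "Ck_on k V (\<lambda>s t. b t)"
    "\<forall>(s,t)\<in>V. (a s, b t) \<in> U"
  shows "Ck_on k V (\<lambda>s t. g (a s) (b t))"
  using assms(3-5)
proof (induction k arbitrary: g)
  case 0
  have c: "continuous_on V (\<lambda>(s,t). (a s, b t))"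
    using 0 by (auto intro!: continuous_on_Pair simp: split_beta)
  have "continuous_on V ((\<lambda>(u,v). g u v) \<circ> (\<lambda>(s,t). (a s, b t)))"
    by (rule continuous_on_compose[OF c]) (use 0 assms(6) in \<open>auto intro: continuous_on_subset\<close>)
  then show ?case by (simp add: o_def split_beta)
next
  case (Suc k)
  note dg = Ck_SucD[OF Suc.prems(1)] and da = Ck_SucD[OF Suc.prems(2)] and db = Ck_SucD[OF Suc.prems(3)]
  have ak: "Ck_on k V (\<lambda>s t. a s)" "Ck_on k V (\<lambda>s t. b t)" using Suc.prems Ck_on_Suc_imp by blast+
  have c0: "Ck_on 0 V (\<lambda>s t. g (a s) (b t))"
  proof -
    have c: "continuous_on V (\<lambda>(s,t). (a s, b t))"
      using da(1) db(1) by (auto intro!: continuous_on_Pair simp: split_beta)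
    have "continuous_on V ((\<lambda>(u,v). g u v) \<circ> (\<lambda>(s,t). (a s, b t)))"
      by (rule continuous_on_compose[OF c]) (use dg(1) assms(6) in \<open>auto intro: continuous_on_subset\<close>)
    then show ?thesis by (simp add: o_def split_beta)
  qed
  show ?case
    apply (rule Ck_SucI'[OF assms(2), where fu="\<lambda>s t. pu (\<lambda>s t. a s) s t *\<^sub>R pu g (a s) (b t)"
          and fv="\<lambda>s t. pv (\<lambda>s t. b t) s t *\<^sub>R pv g (a s) (b t)"])
    using c0 apply simp
  proof -
    fix s t assume st: "(s,t) \<in> V"
    have "((\<lambda>u. g u (b t)) \<circ> a has_vector_derivative pu (\<lambda>s t. a s) s t *\<^sub>R pu g (a s) (b t)) (at s)"
      by (rule vector_diff_chain_at) (use da(2)[OF st] dg(2) assms(6) st in auto)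
    then show "((\<lambda>s. g (a s) (b t)) has_vector_derivative pu (\<lambda>s t. a s) s t *\<^sub>R pu g (a s) (b t)) (at s)"
      by (simp add: o_def)
    have "((\<lambda>v. g (a s) v) \<circ> b has_vector_derivative pv (\<lambda>s t. b t) s t *\<^sub>R pv g (a s) (b t)) (at t)"
      by (rule vector_diff_chain_at) (use db(3)[OF st] dg(3) assms(6) st in auto)
    then show "((\<lambda>t. g (a s) (b t)) has_vector_derivative pv (\<lambda>s t. b t) s t *\<^sub>R pv g (a s) (b t)) (at t)"
      by (simp add: o_def)
  next
    show "Ck_on k V (\<lambda>s t. pu (\<lambda>s t. a s) s t *\<^sub>R pu g (a s) (b t))"
      by (rule Ck_on_scaleR[OF assms(2) da(4) Suc.IH[OF dg(4) ak]])
    show "Ck_on k V (\<lambda>s t. pv (\<lambda>s t. b t) s t *\<^sub>R pv g (a s) (b t))"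
      by (rule Ck_on_scaleR[OF assms(2) db(5) Suc.IH[OF dg(5) ak]])
  qed
qed



lemma sq_dist: "\<bar>s - u\<bar> \<le> h \<Longrightarrow> \<bar>t - v\<bar> \<le> h \<Longrightarrow> dist (s,t) (u,v) \<le> 2*h"
proof -
  assume a: "\<bar>s - u\<bar> \<le> h" "\<bar>t - v\<bar> \<le> h"
  have "dist (s,t) (u,v) \<le> dist s u + dist t v"
    unfolding dist_Pair_Pair by (rule sqrt_sum_squares_le_sum) auto
  also have "\<dots> \<le> 2*h" using a by (simp add: dist_real_def)
  finally show ?thesis .
qed

lemma schwarz_real:
  fixes F :: "real \<Rightarrow> real \<Rightarrow> real"
  assumes "open D" "Ck_on 2 D F" "(u,v) \<in> D"
  shows "pv (pu F) u v = pu (pv F) u v"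
proof -
  have C2: "Ck_on (Suc (Suc 0)) D F" using assms(2) by (simp add: numeral_2_eq_2)
  note d = Ck_SucD[OF C2]
  note du = Ck_SucD[OF d(4)] and dv = Ck_SucD[OF d(5)]
  obtain r where r: "r > 0" "ball (u,v) r \<subseteq> D" using assms(1,3) openE by blast
  define A where "A = pv (pu F) u v"
  define B where "B = pu (pv F) u v"
  have cG: "continuous_on D (\<lambda>(s,t). pv (pu F) s t)" using du(5) by (simp add: Ck_on_cont)
  have cH: "continuous_on D (\<lambda>(s,t). pu (pv F) s t)" using dv(4) by (simp add: Ck_on_cont)
  show ?thesis
  proof (rule ccontr)
    assume ne: "pv (pu F) u v \<noteq> pu (pv F) u v"
    define e where "e = \<bar>A - B\<bar> / 3"
    have e: "e > 0" using ne by (simp add: e_def A_def B_def)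
    obtain d1 where d1: "d1 > 0" "\<And>p. p \<in> D \<Longrightarrow> dist p (u,v) < d1 \<Longrightarrow> dist ((\<lambda>(s,t). pv (pu F) s t) p) A < e"
      using cG[unfolded continuous_on_iff] assms(3) e unfolding A_def by fastforce
    obtain d2 where d2: "d2 > 0" "\<And>p. p \<in> D \<Longrightarrow> dist p (u,v) < d2 \<Longrightarrow> dist ((\<lambda>(s,t). pu (pv F) s t) p) B < e"
      using cH[unfolded continuous_on_iff] assms(3) e unfolding B_def by fastforce
    define h where "h = min r (min d1 d2) / 4"
    have h: "h > 0" "2*h < r" "2*h < d1" "2*h < d2" using r d1 d2 by (auto simp: h_def)
    have sq: "(s,t) \<in> D" "dist (s,t) (u,v) < r" "dist (s,t) (u,v) < d1" "dist (s,t) (u,v) < d2"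
      if "u \<le> s" "s \<le> u + h" "v \<le> t" "t \<le> v + h" for s t
    proof -
      have "dist (s,t) (u,v) \<le> 2*h" using sq_dist[of s u h t v] that by auto
      then show "dist (s,t) (u,v) < r" "dist (s,t) (u,v) < d1" "dist (s,t) (u,v) < d2" using h by auto
      then show "(s,t) \<in> D" using r by (auto simp: dist_commute)
    qed
    define \<Delta> where "\<Delta> = F (u+h) (v+h) - F (u+h) v - F u (v+h) + F u v"
    have D1: "DERIV (\<lambda>s. F s (v+h) - F s v) x :> pu F x (v+h) - pu F x v" if "u \<le> x" "x \<le> u + h" for x
      using d(2)[OF sq(1)[of x "v+h"]] d(2)[OF sq(1)[of x v]] that h
      by (auto simp: real_vd intro!: DERIV_diff)
    obtain \<xi> where \<xi>: "u < \<xi>" "\<xi> < u + h"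
      "(F (u+h) (v+h) - F (u+h) v) - (F u (v+h) - F u v) = h * (pu F \<xi> (v+h) - pu F \<xi> v)"
      using MVT2[of u "u+h" "\<lambda>s. F s (v+h) - F s v" "\<lambda>s. pu F s (v+h) - pu F s v", OF _ D1] h by auto
    have D2: "DERIV (\<lambda>t. pu F \<xi> t) x :> pv (pu F) \<xi> x" if "v \<le> x" "x \<le> v + h" for x
      using du(3)[OF sq(1)[of \<xi> x]] that h \<xi> by (auto simp: real_vd)
    obtain \<eta> where \<eta>: "v < \<eta>" "\<eta> < v + h"
      "pu F \<xi> (v+h) - pu F \<xi> v = h * pv (pu F) \<xi> \<eta>"
      using MVT2[of v "v+h" "\<lambda>t. pu F \<xi> t" "\<lambda>t. pv (pu F) \<xi> t", OF _ D2] h by auto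
    have D3: "DERIV (\<lambda>t. F (u+h) t - F u t) x :> pv F (u+h) x - pv F u x" if "v \<le> x" "x \<le> v + h" for x
      using d(3)[OF sq(1)[of "u+h" x]] d(3)[OF sq(1)[of u x]] that h
      by (auto simp: real_vd intro!: DERIV_diff)
    obtain \<eta>' where \<eta>': "v < \<eta>'" "\<eta>' < v + h"
      "(F (u+h) (v+h) - F u (v+h)) - (F (u+h) v - F u v) = h * (pv F (u+h) \<eta>' - pv F u \<eta>')"
      using MVT2[of v "v+h" "\<lambda>t. F (u+h) t - F u t" "\<lambda>t. pv F (u+h) t - pv F u t", OF _ D3] h by auto
    have D4: "DERIV (\<lambda>s. pv F s \<eta>') x :> pu (pv F) x \<eta>'" if "u \<le> x" "x \<le> u + h" for x
      using dv(2)[OF sq(1)[of x \<eta>']] that h \<eta>' by (auto simp: real_vd)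
    obtain \<xi>' where \<xi>': "u < \<xi>'" "\<xi>' < u + h"
      "pv F (u+h) \<eta>' - pv F u \<eta>' = h * pu (pv F) \<xi>' \<eta>'"
      using MVT2[of u "u+h" "\<lambda>s. pv F s \<eta>'" "\<lambda>s. pu (pv F) s \<eta>'", OF _ D4] h by auto
    have "h * h * pv (pu F) \<xi> \<eta> = h * h * pu (pv F) \<xi>' \<eta>'"
      using \<xi>(3) \<eta>(3) \<eta>'(3) \<xi>'(3) by (simp add: algebra_simps)
    then have eq: "pv (pu F) \<xi> \<eta> = pu (pv F) \<xi>' \<eta>'" using h by simp
    have "dist (pv (pu F) \<xi> \<eta>) A < e" using d1(2)[of "(\<xi>,\<eta>)"] sq[of \<xi> \<eta>] \<xi> \<eta> by auto
    moreover have "dist (pu (pv F) \<xi>' \<eta>') B < e" using d2(2)[of "(\<xi>',\<eta>')"] sq[of \<xi>' \<eta>'] \<xi>' \<eta>' by auto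
    ultimately have "\<bar>A - B\<bar> < 2*e" using eq by (simp add: dist_real_def)
    then show False using e e_def by simp
  qed
qed

lemma pu_inner_const:
  assumes "((\<lambda>s. X s v) has_vector_derivative pu X u v) (at u)"
  shows "pu (\<lambda>u v. inner w (X u v)) u v = inner w (pu X u v)"
  using bounded_linear.has_vector_derivative[OF bounded_linear_inner_right assms, of w]
  unfolding pu_def[of "\<lambda>u v. inner w (X u v)"] by (rule vector_derivative_at)

lemma pv_inner_const:
  assumes "((\<lambda>t. X u t) has_vector_derivative pv X u v) (at v)"
  shows "pv (\<lambda>u v. inner w (X u v)) u v = inner w (pv X u v)"
  using bounded_linear.has_vector_derivative[OF bounded_linear_inner_right assms, of w]
  unfolding pv_def[of "\<lambda>u v. inner w (X u v)"] by (rule vector_derivative_at)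

lemma schwarz:
  fixes X :: "real \<Rightarrow> real \<Rightarrow> 'a::real_inner"
  assumes "open D" "Ck_on 2 D X" "(u,v) \<in> D"
  shows "pv (pu X) u v = pu (pv X) u v"
proof -
  have C2: "Ck_on (Suc (Suc 0)) D X" using assms(2) by (simp add: numeral_2_eq_2)
  note d = Ck_SucD[OF C2]
  note du = Ck_SucD[OF d(4)] and dv = Ck_SucD[OF d(5)]
  define w where "w = pv (pu X) u v - pu (pv X) u v"
  define F where "F = (\<lambda>u v. inner w (X u v))"
  have F2: "Ck_on 2 D F" unfolding F_def by (rule Ck_on_inner[OF assms(1) Ck_on_const assms(2)])
  have e1: "\<forall>(s,t)\<in>D. pu F s t = inner w (pu X s t)" using d(2) pu_inner_const unfolding F_def by blast
  have e2: "\<forall>(s,t)\<in>D. pv F s t = inner w (pv X s t)" using d(3) pv_inner_const unfolding F_def by blast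
  have "pv (pu F) u v = pv (\<lambda>s t. inner w (pu X s t)) u v" by (rule pv_cong[OF assms(1) e1 assms(3)])
  also have "\<dots> = inner w (pv (pu X) u v)" by (rule pv_inner_const[OF du(3)[OF assms(3)]])
  finally have a: "pv (pu F) u v = inner w (pv (pu X) u v)" .
  have "pu (pv F) u v = pu (\<lambda>s t. inner w (pv X s t)) u v" by (rule pu_cong[OF assms(1) e2 assms(3)])
  also have "\<dots> = inner w (pu (pv X) u v)" by (rule pu_inner_const[OF dv(2)[OF assms(3)]])
  finally have b: "pu (pv F) u v = inner w (pu (pv X) u v)" .
  have "inner w w = 0" using schwarz_real[OF assms(1) F2 assms(3)] a b
    by (simp add: w_def inner_diff_right)
  then show ?thesis by (simp add: w_def)
qed



lemma bounded_bilinear_cross3: "bounded_bilinear cross3"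
  using bilinear_conv_bounded_bilinear bilinear_cross by blast

lemma sm_Ck: "smooth_on2 D f \<Longrightarrow> Ck_on k D f"
  by (simp add: smooth_on2_def)

lemma sm_pu: "smooth_on2 D f \<Longrightarrow> smooth_on2 D (pu f)"
  unfolding smooth_on2_def using Ck_SucD(4) by blast

lemma sm_pv: "smooth_on2 D f \<Longrightarrow> smooth_on2 D (pv f)"
  unfolding smooth_on2_def using Ck_SucD(5) by blast

lemma sm_du: "smooth_on2 D f \<Longrightarrow> (u,v) \<in> D \<Longrightarrow> ((\<lambda>s. f s v) has_vector_derivative pu f u v) (at u)"
  unfolding smooth_on2_def using Ck_SucD(2) by blast

lemma sm_dv: "smooth_on2 D f \<Longrightarrow> (u,v) \<in> D \<Longrightarrow> ((\<lambda>t. f u t) has_vector_derivative pv f u v) (at v)"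
  unfolding smooth_on2_def using Ck_SucD(3) by blast

lemma sm_cont: "smooth_on2 D f \<Longrightarrow> continuous_on D (\<lambda>(u,v). f u v)"
  unfolding smooth_on2_def using Ck_on_cont by blast

lemma sm_cong: "open D \<Longrightarrow> \<forall>(u,v)\<in>D. f u v = g u v \<Longrightarrow> smooth_on2 D f \<Longrightarrow> smooth_on2 D g"
  unfolding smooth_on2_def using Ck_on_cong by blast

lemma sm_const: "smooth_on2 D (\<lambda>u v. c)"
  unfolding smooth_on2_def using Ck_on_const by blast

lemma sm_add: "open D \<Longrightarrow> smooth_on2 D a \<Longrightarrow> smooth_on2 D b \<Longrightarrow> smooth_on2 D (\<lambda>u v. a u v + b u v)"
  unfolding smooth_on2_def using Ck_on_add by blast

lemma sm_diff: "open D \<Longrightarrow> smooth_on2 D a \<Longrightarrow> smooth_on2 D b \<Longrightarrow> smooth_on2 D (\<lambda>u v. a u v - b u v)"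
  unfolding smooth_on2_def using Ck_on_diff by blast

lemma sm_neg: "open D \<Longrightarrow> smooth_on2 D a \<Longrightarrow> smooth_on2 D (\<lambda>u v. - a u v)"
  unfolding smooth_on2_def using Ck_on_neg by blast

lemma sm_bilinear: "bounded_bilinear bop \<Longrightarrow> open D \<Longrightarrow> smooth_on2 D a \<Longrightarrow> smooth_on2 D b \<Longrightarrow> smooth_on2 D (\<lambda>u v. bop (a u v) (b u v))"
  unfolding smooth_on2_def using Ck_on_bilinear by blast

lemma sm_mult: "open D \<Longrightarrow> smooth_on2 D a \<Longrightarrow> smooth_on2 D b \<Longrightarrow> smooth_on2 D (\<lambda>u v. a u v * (b u v :: real))"
  by (rule sm_bilinear[OF bounded_bilinear_mult])

lemma sm_scaleR: "open D \<Longrightarrow> smooth_on2 D a \<Longrightarrow> smooth_on2 D b \<Longrightarrow> smooth_on2 D (\<lambda>u v. a u v *\<^sub>R b u v)"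
  by (rule sm_bilinear[OF bounded_bilinear_scaleR])

lemma sm_inner: "open D \<Longrightarrow> smooth_on2 D a \<Longrightarrow> smooth_on2 D b \<Longrightarrow> smooth_on2 D (\<lambda>u v. inner (a u v) (b u v :: 'a::real_inner))"
  by (rule sm_bilinear[OF bounded_bilinear_inner])

lemma sm_cross: "open D \<Longrightarrow> smooth_on2 D a \<Longrightarrow> smooth_on2 D b \<Longrightarrow> smooth_on2 D (\<lambda>u v. cross3 (a u v) (b u v))"
  by (rule sm_bilinear[OF bounded_bilinear_cross3])

lemma sm_inverse: "open D \<Longrightarrow> smooth_on2 D h \<Longrightarrow> \<forall>(u,v)\<in>D. h u v \<noteq> (0::real) \<Longrightarrow> smooth_on2 D (\<lambda>u v. inverse (h u v))"
  unfolding smooth_on2_def using Ck_on_inverse by blast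

lemma sm_divide: "open D \<Longrightarrow> smooth_on2 D a \<Longrightarrow> smooth_on2 D h \<Longrightarrow> \<forall>(u,v)\<in>D. h u v \<noteq> (0::real) \<Longrightarrow> smooth_on2 D (\<lambda>u v. a u v / h u v)"
  unfolding smooth_on2_def using Ck_on_divide by blast

lemma sm_sqrt: "open D \<Longrightarrow> smooth_on2 D h \<Longrightarrow> \<forall>(u,v)\<in>D. h u v > (0::real) \<Longrightarrow> smooth_on2 D (\<lambda>u v. sqrt (h u v))"
  unfolding smooth_on2_def using Ck_on_sqrt by blast

lemma sm_ln: "open D \<Longrightarrow> smooth_on2 D h \<Longrightarrow> \<forall>(u,v)\<in>D. h u v > (0::real) \<Longrightarrow> smooth_on2 D (\<lambda>u v. ln (h u v))"
  unfolding smooth_on2_def using Ck_on_ln by blast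

lemma sm_exp: "open D \<Longrightarrow> smooth_on2 D h \<Longrightarrow> smooth_on2 D (\<lambda>u v. exp (h u v :: real))"
  unfolding smooth_on2_def using Ck_on_exp by blast

lemma sm_comp: "open U \<Longrightarrow> open V \<Longrightarrow> smooth_on2 U g \<Longrightarrow> smooth_on2 V (\<lambda>s t. a s) \<Longrightarrow> smooth_on2 V (\<lambda>s t. b t)
  \<Longrightarrow> \<forall>(s,t)\<in>V. (a s, b t) \<in> U \<Longrightarrow> smooth_on2 V (\<lambda>s t. g (a s) (b t))"
  unfolding smooth_on2_def using Ck_on_comp by blast

lemma sm_schwarz: "open D \<Longrightarrow> smooth_on2 D (X :: real \<Rightarrow> real \<Rightarrow> 'a::real_inner) \<Longrightarrow> (u,v) \<in> D \<Longrightarrow> pv (pu X) u v = pu (pv X) u v"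
  unfolding smooth_on2_def using schwarz by blast

lemma sm_SucI:
  assumes "open D" "continuous_on D (\<lambda>(u,v). f u v)"
    "\<And>u v. (u,v) \<in> D \<Longrightarrow> ((\<lambda>s. f s v) has_vector_derivative fu u v) (at u)"
    "\<And>u v. (u,v) \<in> D \<Longrightarrow> ((\<lambda>t. f u t) has_vector_derivative fv u v) (at v)"
    "smooth_on2 D fu" "smooth_on2 D fv"
  shows "smooth_on2 D f"
  unfolding smooth_on2_def
proof
  fix k show "Ck_on k D f"
  proof (cases k)
    case 0 then show ?thesis using assms(2) by simp
  next
    case (Suc m) then show ?thesis using Ck_SucI'[OF assms(1-4)] assms(5,6) by (simp add: smooth_on2_def)
  qed
qed

lemma pu_at: "((\<lambda>s. f s v) has_vector_derivative d) (at u) \<Longrightarrow> pu f u v = d"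
  unfolding pu_def by (rule vector_derivative_at)

lemma pv_at: "((\<lambda>t. f u t) has_vector_derivative d) (at v) \<Longrightarrow> pv f u v = d"
  unfolding pv_def by (rule vector_derivative_at)

lemma pu_zero:
  assumes "open D" "\<forall>(u,v)\<in>D. g u v = 0" "(u,v) \<in> D"
  shows "pu g u v = 0"
proof -
  have "pu g u v = pu (\<lambda>u v. 0) u v" by (rule pu_cong[OF assms])
  then show ?thesis by (simp add: pu_def)
qed

lemma pv_zero:
  assumes "open D" "\<forall>(u,v)\<in>D. g u v = 0" "(u,v) \<in> D"
  shows "pv g u v = 0"
proof -
  have "pv g u v = pv (\<lambda>u v. 0) u v" by (rule pv_cong[OF assms])
  then show ?thesis by (simp add: pv_def)
qed

lemma pu_inner:
  assumes "smooth_on2 D a" "smooth_on2 D b" "(u,v) \<in> D"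
  shows "pu (\<lambda>u v. inner (a u v) (b u v :: 'a::real_inner)) u v = inner (a u v) (pu b u v) + inner (pu a u v) (b u v)"
  by (rule pu_at, rule bounded_bilinear.has_vector_derivative[OF bounded_bilinear_inner])
     (use sm_du assms in auto)

lemma pv_inner:
  assumes "smooth_on2 D a" "smooth_on2 D b" "(u,v) \<in> D"
  shows "pv (\<lambda>u v. inner (a u v) (b u v :: 'a::real_inner)) u v = inner (a u v) (pv b u v) + inner (pv a u v) (b u v)"
  by (rule pv_at, rule bounded_bilinear.has_vector_derivative[OF bounded_bilinear_inner])
     (use sm_dv assms in auto)



lemma frame3:
  fixes a b w z :: "real^3"
  assumes ab: "inner a b = 0" and c: "cross3 a b \<noteq> 0"
    and n: "n = (1 / norm (cross3 a b)) *\<^sub>R cross3 a b"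
  shows "inner z w = inner z a * inner w a / inner a a + inner z b * inner w b / inner b b + inner z n * inner w n"
proof -
  have a0: "a \<noteq> 0" using c by auto
  have b0: "b \<noteq> 0" using c by auto
  have aa: "inner a a \<noteq> 0" "inner b b \<noteq> 0" using a0 b0 by auto
  have na: "inner n a = 0" "inner n b = 0" unfolding n
    by (simp_all add: dot_cross_self inner_commute)
  have nn: "inner n n = 1" unfolding n using c
    by (simp add: dot_square_norm power2_eq_square)
  define r where "r = w - (inner w a / inner a a) *\<^sub>R a - (inner w b / inner b b) *\<^sub>R b - inner w n *\<^sub>R n"
  have ra: "inner r a = 0" using aa ab na unfolding r_def
    by (simp add: inner_diff_left inner_diff_right inner_commute)
  have rb: "inner r b = 0" using aa ab na unfolding r_def
    by (simp add: inner_diff_left inner_diff_right inner_commute)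
  have rn: "inner r n = 0" using aa ab na nn unfolding r_def
    by (simp add: inner_diff_left inner_diff_right inner_commute)
  have rc: "inner (cross3 a b) r = 0" using rn c unfolding n
    by (simp add: inner_commute)
  have "cross3 r (cross3 a b) = 0" using ra rb
    by (simp add: Cross3.Lagrange inner_commute)
  then have "cross3 (cross3 a b) r = 0" by (metis cross_skew neg_equal_0_iff_equal)
  then have "r = 0" using cross_dot_cancel[of "cross3 a b" r 0] rc c by simp
  then have w: "w = (inner w a / inner a a) *\<^sub>R a + (inner w b / inner b b) *\<^sub>R b + inner w n *\<^sub>R n"
    unfolding r_def by (simp add: algebra_simps)
  show ?thesis
    apply (subst w)
    by (simp add: inner_add_right inner_commute mult.commute)
qed

lemma pu_constD:
  assumes "open D" "\<forall>(u,v)\<in>D. g u v = c" "(u,v) \<in> D"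
  shows "pu g u v = 0"
proof -
  have "pu g u v = pu (\<lambda>u v. c) u v" by (rule pu_cong[OF assms])
  then show ?thesis by (simp add: pu_def)
qed

lemma pv_constD:
  assumes "open D" "\<forall>(u,v)\<in>D. g u v = c" "(u,v) \<in> D"
  shows "pv g u v = 0"
proof -
  have "pv g u v = pv (\<lambda>u v. c) u v" by (rule pv_cong[OF assms])
  then show ?thesis by (simp add: pv_def)
qed

lemma fE_fun: "fE x = (\<lambda>u v. inner (pu x u v) (pu x u v))" by (intro ext) (simp add: fE_def)
lemma fF_fun: "fF x = (\<lambda>u v. inner (pu x u v) (pv x u v))" by (intro ext) (simp add: fF_def)
lemma fG_fun: "fG x = (\<lambda>u v. inner (pv x u v) (pv x u v))" by (intro ext) (simp add: fG_def)
lemma fL_fun: "fL x = (\<lambda>u v. inner (pu (pu x) u v) (unit_normal x u v))" by (intro ext) (simp add: fL_def)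
lemma fM_fun: "fM x = (\<lambda>u v. inner (pv (pu x) u v) (unit_normal x u v))" by (intro ext) (simp add: fM_def)
lemma fN_fun: "fN x = (\<lambda>u v. inner (pv (pv x) u v) (unit_normal x u v))" by (intro ext) (simp add: fN_def)
lemma nu1_fun: "nu1 x = (\<lambda>u v. fL x u v / fE x u v)" by (intro ext) (simp add: nu1_def)
lemma nu2_fun: "nu2 x = (\<lambda>u v. fN x u v / fG x u v)" by (intro ext) (simp add: nu2_def)
lemma n_fun: "unit_normal x = (\<lambda>u v. inverse (sqrt (inner (cross3 (pu x u v) (pv x u v)) (cross3 (pu x u v) (pv x u v))))
    *\<^sub>R cross3 (pu x u v) (pv x u v))"
  by (intro ext) (simp add: unit_normal_def norm_eq_sqrt_inner divide_inverse)

locale psurf =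
  fixes D :: "(real \<times> real) set" and x :: surf
  assumes reg: "regular_surface D x" and pp: "principal_params D x"
begin

lemma oD: "open D" using reg by (simp add: regular_surface_def)
lemma smx: "smooth_on2 D x" using reg by (simp add: regular_surface_def)
lemma cne: "(u,v) \<in> D \<Longrightarrow> cross3 (pu x u v) (pv x u v) \<noteq> 0" using reg by (auto simp: regular_surface_def)
lemma Fz: "\<forall>(u,v)\<in>D. fF x u v = 0" using pp by (auto simp: principal_params_def)
lemma Mz: "\<forall>(u,v)\<in>D. fM x u v = 0" using pp by (auto simp: principal_params_def)

lemma sm_xu: "smooth_on2 D (pu x)" by (rule sm_pu[OF smx])
lemma sm_xv: "smooth_on2 D (pv x)" by (rule sm_pv[OF smx])
lemma sm_xuu: "smooth_on2 D (pu (pu x))" by (rule sm_pu[OF sm_xu])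
lemma sm_xuv: "smooth_on2 D (pv (pu x))" by (rule sm_pv[OF sm_xu])
lemma sm_xvu: "smooth_on2 D (pu (pv x))" by (rule sm_pu[OF sm_xv])
lemma sm_xvv: "smooth_on2 D (pv (pv x))" by (rule sm_pv[OF sm_xv])

lemma Epos: "(u,v) \<in> D \<Longrightarrow> fE x u v > 0"
  using cne[of u v] by (auto simp: fE_def)
lemma Gpos: "(u,v) \<in> D \<Longrightarrow> fG x u v > 0"
  using cne[of u v] by (auto simp: fG_def)

lemma sm_E: "smooth_on2 D (fE x)" unfolding fE_fun by (rule sm_inner[OF oD sm_xu sm_xu])
lemma sm_G: "smooth_on2 D (fG x)" unfolding fG_fun by (rule sm_inner[OF oD sm_xv sm_xv])

lemma sm_c: "smooth_on2 D (\<lambda>u v. cross3 (pu x u v) (pv x u v))"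
  by (rule sm_cross[OF oD sm_xu sm_xv])

lemma sm_n: "smooth_on2 D (unit_normal x)"
  unfolding n_fun
  apply (rule sm_scaleR[OF oD _ sm_c])
  apply (rule sm_inverse[OF oD sm_sqrt[OF oD sm_inner[OF oD sm_c sm_c]]])
  using cne by auto

lemma sm_L: "smooth_on2 D (fL x)" unfolding fL_fun by (rule sm_inner[OF oD sm_xuu sm_n])
lemma sm_M: "smooth_on2 D (fM x)" unfolding fM_fun by (rule sm_inner[OF oD sm_xuv sm_n])
lemma sm_N: "smooth_on2 D (fN x)" unfolding fN_fun by (rule sm_inner[OF oD sm_xvv sm_n])
lemma sm_nu1: "smooth_on2 D (nu1 x)" unfolding nu1_fun
  by (rule sm_divide[OF oD sm_L sm_E]) (use Epos in \<open>auto simp: less_imp_neq[symmetric]\<close>)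
lemma sm_nu2: "smooth_on2 D (nu2 x)" unfolding nu2_fun
  by (rule sm_divide[OF oD sm_N sm_G]) (use Gpos in \<open>auto simp: less_imp_neq[symmetric]\<close>)

lemma n_xu: "inner (unit_normal x u v) (pu x u v) = 0"
  by (simp add: unit_normal_def dot_cross_self inner_commute)
lemma n_xv: "inner (unit_normal x u v) (pv x u v) = 0"
  by (simp add: unit_normal_def dot_cross_self inner_commute)
lemma n_n: "(u,v) \<in> D \<Longrightarrow> inner (unit_normal x u v) (unit_normal x u v) = 1"
  using cne[of u v] by (simp add: unit_normal_def dot_square_norm power2_eq_square)

lemma frame:
  assumes "(u,v) \<in> D"
  shows "inner z w = inner z (pu x u v) * inner w (pu x u v) / fE x u v
     + inner z (pv x u v) * inner w (pv x u v) / fG x u v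
     + inner z (unit_normal x u v) * inner w (unit_normal x u v)"
  using frame3[of "pu x u v" "pv x u v" "unit_normal x u v" z w] Fz cne assms
  by (auto simp: fE_def fG_def fF_def unit_normal_def)

end



context psurf
begin

lemma codazzi_facts:
  assumes p: "(u,v) \<in> D"
  defines "a \<equiv> pu x u v" and "b \<equiv> pv x u v" and "n \<equiv> unit_normal x u v"
    and "A \<equiv> pv (pu x) u v" and "P \<equiv> pu (pu x) u v" and "Q \<equiv> pv (pv x) u v"
    and "nu \<equiv> pu (unit_normal x) u v" and "nv \<equiv> pv (unit_normal x) u v"
  shows "pv (nu1 x) u v = (nu2 x u v - nu1 x u v) * pv (fE x) u v / (2 * fE x u v)"
    and "pu (nu2 x) u v = (nu1 x u v - nu2 x u v) * pu (fG x) u v / (2 * fG x u v)"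
proof -
  have sym: "pu (pv x) u v = A" unfolding A_def using sm_schwarz[OF oD smx p] by simp
  have Ev: "pv (fE x) u v = 2 * inner a A"
    unfolding fE_fun using pv_inner[OF sm_xu sm_xu p] by (simp add: a_def A_def inner_commute)
  have Gu: "pu (fG x) u v = 2 * inner b A"
    unfolding fG_fun using pu_inner[OF sm_xv sm_xv p] sym by (simp add: b_def inner_commute)
  have Fu: "inner P b + inner a A = 0"
  proof -
    have "pu (fF x) u v = 0" by (rule pu_zero[OF oD Fz p])
    then show ?thesis unfolding fF_fun using pu_inner[OF sm_xu sm_xv p] sym
      by (simp add: a_def b_def P_def inner_commute add.commute)
  qed
  have Fv: "inner a Q + inner A b = 0"
  proof -
    have "pv (fF x) u v = 0" by (rule pv_zero[OF oD Fz p])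
    then show ?thesis unfolding fF_fun using pv_inner[OF sm_xu sm_xv p]
      by (simp add: a_def b_def Q_def A_def)
  qed
  have z1: "\<forall>(u,v)\<in>D. inner (unit_normal x u v) (pu x u v) = 0" using n_xu by auto
  have z2: "\<forall>(u,v)\<in>D. inner (unit_normal x u v) (pv x u v) = 0" using n_xv by auto
  have z3: "\<forall>(u,v)\<in>D. inner (unit_normal x u v) (unit_normal x u v) = 1" using n_n by auto
  have nu_a: "inner n P + inner nu a = 0"
    using pu_zero[OF oD z1 p] pu_inner[OF sm_n sm_xu p] by (simp add: n_def P_def nu_def a_def)
  have nv_a: "inner n A + inner nv a = 0"
    using pv_zero[OF oD z1 p] pv_inner[OF sm_n sm_xu p] by (simp add: n_def A_def nv_def a_def)
  have nu_b: "inner n A + inner nu b = 0"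
    using pu_zero[OF oD z2 p] pu_inner[OF sm_n sm_xv p] sym by (simp add: n_def nu_def b_def)
  have nv_b: "inner n Q + inner nv b = 0"
    using pv_zero[OF oD z2 p] pv_inner[OF sm_n sm_xv p] by (simp add: n_def Q_def nv_def b_def)
  have nu_n: "inner nu n = 0"
    using pu_constD[OF oD z3 p] pu_inner[OF sm_n sm_n p] by (simp add: n_def nu_def inner_commute)
  have nv_n: "inner nv n = 0"
    using pv_constD[OF oD z3 p] pv_inner[OF sm_n sm_n p] by (simp add: n_def nv_def inner_commute)
  have M0: "inner A n = 0" using Mz p by (auto simp: fM_def A_def n_def)
  have E0: "fE x u v \<noteq> 0" using Epos[OF p] by simp
  have G0: "fG x u v \<noteq> 0" using Gpos[OF p] by simp
  have Edef: "fE x u v = inner a a" by (simp add: fE_def a_def)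
  have Gdef: "fG x u v = inner b b" by (simp add: fG_def b_def)
  have Ldef: "fL x u v = inner P n" by (simp add: fL_def P_def n_def)
  have Ndef: "fN x u v = inner Q n" by (simp add: fN_def Q_def n_def)
  have n1: "nu1 x u v = inner P n / fE x u v" by (simp add: nu1_def Ldef)
  have n2: "nu2 x u v = inner Q n / fG x u v" by (simp add: nu2_def Ndef)
  have fr: "inner z w = inner z a * inner w a / fE x u v + inner z b * inner w b / fG x u v + inner z n * inner w n" for z w
    using frame[OF p, of z w] by (simp add: a_def b_def n_def)
  have nA: "inner n A = 0" using M0 by (simp add: inner_commute)
  have nva: "inner nv a = 0" using nv_a nA by simp
  have nvb: "inner nv b = - inner Q n" using nv_b by (simp add: inner_commute eq_neg_iff_add_eq_0)
  have nvn: "inner nv n = 0" by (rule nv_n)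
  have nua: "inner nu a = - inner P n" using nu_a by (simp add: inner_commute eq_neg_iff_add_eq_0)
  have nub: "inner nu b = 0" using nu_b nA by simp
  have nun: "inner nu n = 0" by (rule nu_n)
  have PA: "inner P nv = - inner P b * inner Q n / fG x u v"
    using fr[of P nv] unfolding nva nvb nvn by simp
  have Anu: "inner A nu = - inner A a * inner P n / fE x u v"
    using fr[of A nu] unfolding nua nub nun by simp
  have QU: "inner Q nu = - inner Q a * inner P n / fE x u v"
    using fr[of Q nu] unfolding nua nub nun by simp
  have Anv: "inner A nv = - inner A b * inner Q n / fG x u v"
    using fr[of A nv] unfolding nva nvb nvn by simp
  have z4: "\<forall>(u,v)\<in>D. inner (pv (pu x) u v) (unit_normal x u v) = 0" using Mz by (auto simp: fM_def)
  have Mu: "inner (pu (pv (pu x)) u v) n + inner A nu = 0"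
    using pu_zero[OF oD z4 p] pu_inner[OF sm_xuv sm_n p] by (simp add: n_def nu_def A_def inner_commute add.commute)
  have Mv: "inner (pv (pv (pu x)) u v) n + inner A nv = 0"
    using pv_zero[OF oD z4 p] pv_inner[OF sm_xuv sm_n p] by (simp add: n_def nv_def A_def inner_commute add.commute)
  have Lv: "pv (fL x) u v = inner (pu (pv (pu x)) u v) n + inner P nv"
    unfolding fL_fun using pv_inner[OF sm_xuu sm_n p] sm_schwarz[OF oD sm_xu p]
    by (simp add: n_def nv_def P_def inner_commute add.commute)
  have xvu_eq: "\<forall>(s,t)\<in>D. pu (pv x) s t = pv (pu x) s t" using sm_schwarz[OF oD smx] by auto
  have Nu: "pu (fN x) u v = inner (pv (pv (pu x)) u v) n + inner Q nu"
  proof -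
    have "pu (pv (pv x)) u v = pv (pu (pv x)) u v" using sm_schwarz[OF oD sm_xv p] by simp
    also have "\<dots> = pv (pv (pu x)) u v" by (rule pv_cong[OF oD xvu_eq p])
    finally have e: "pu (pv (pv x)) u v = pv (pv (pu x)) u v" .
    show ?thesis unfolding fN_fun using pu_inner[OF sm_xvv sm_n p] e
      by (simp add: n_def nu_def Q_def inner_commute add.commute)
  qed
  have dL: "((\<lambda>t. fL x u t) has_real_derivative pv (fL x) u v) (at v)" using sm_dv[OF sm_L p] by (simp add: real_vd)
  have dE: "((\<lambda>t. fE x u t) has_real_derivative pv (fE x) u v) (at v)" using sm_dv[OF sm_E p] by (simp add: real_vd)
  have dN: "((\<lambda>s. fN x s v) has_real_derivative pu (fN x) u v) (at u)" using sm_du[OF sm_N p] by (simp add: real_vd)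
  have dG: "((\<lambda>s. fG x s v) has_real_derivative pu (fG x) u v) (at u)" using sm_du[OF sm_G p] by (simp add: real_vd)
  have nu1v: "pv (nu1 x) u v = (pv (fL x) u v * fE x u v - fL x u v * pv (fE x) u v) / (fE x u v * fE x u v)"
    unfolding nu1_fun by (rule pv_at) (simp add: real_vd DERIV_divide[OF dL dE E0])
  have nu2u: "pu (nu2 x) u v = (pu (fN x) u v * fG x u v - fN x u v * pu (fG x) u v) / (fG x u v * fG x u v)"
    unfolding nu2_fun by (rule pu_at) (simp add: real_vd DERIV_divide[OF dN dG G0])
  have aA: "inner A a = inner a A" "inner P b = - inner a A" using Fu by (simp_all add: inner_commute eq_neg_iff_add_eq_0)
  have I1: "inner (pu (pv (pu x)) u v) n = inner a A * inner P n / fE x u v"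
    using Mu Anu aA by simp
  have I2: "inner P nv = inner a A * inner Q n / fG x u v" using PA aA by simp
  show "pv (nu1 x) u v = (nu2 x u v - nu1 x u v) * pv (fE x) u v / (2 * fE x u v)"
    unfolding nu1v n1 n2 Lv Ev Ldef I1 I2 using E0 G0
    by (simp add: field_simps)
  have bA: "inner A b = inner b A" "inner a Q = - inner b A" using Fv by (simp_all add: inner_commute eq_neg_iff_add_eq_0)
  have J1: "inner (pv (pv (pu x)) u v) n = inner b A * inner Q n / fG x u v"
    using Mv Anv bA by simp
  have J2: "inner Q nu = inner b A * inner P n / fE x u v" using QU bA by (simp add: inner_commute)
  show "pu (nu2 x) u v = (nu1 x u v - nu2 x u v) * pu (fG x) u v / (2 * fG x u v)"
    unfolding nu2u n1 n2 Nu Gu Ndef J1 J2 using E0 G0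
    by (simp add: field_simps)
qed

end



locale wsurf = psurf +
  fixes I :: "real set" and f g Phi Psi :: "real \<Rightarrow> real" and nu :: "real \<Rightarrow> real \<Rightarrow> real"
  assumes sr: "strongly_regular D x" and wd: "weingarten_data D x I f g nu"
    and dPhi: "\<forall>t\<in>I. (Phi has_real_derivative (deriv f t / (f t - g t))) (at t)"
    and dPsi: "\<forall>t\<in>I. (Psi has_real_derivative (deriv g t / (g t - f t))) (at t)"
begin

lemma W: "open I \<and> (\<forall>t\<in>I. f differentiable (at t) \<and> g differentiable (at t) \<and> f t - g t > 0 \<and> deriv f t * deriv g t \<noteq> 0) \<and>
  (\<lambda>(u,v). nu u v) differentiable_on D \<and>
  (\<forall>(u,v)\<in>D. nu u v \<in> I \<and> pu nu u v * pv nu u v \<noteq> 0 \<and> nu1 x u v = f (nu u v) \<and> nu2 x u v = g (nu u v))"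
  using wd unfolding weingarten_data_def by assumption
lemma wdD1: "open I" using W by (rule conjunct1)
lemma wdD2: "\<forall>t\<in>I. f differentiable (at t) \<and> g differentiable (at t) \<and> f t - g t > 0 \<and> deriv f t * deriv g t \<noteq> 0"
  using W by (elim conjE)
lemma wdD3: "(\<lambda>(u,v). nu u v) differentiable_on D" using W by (elim conjE)
lemma wdD4: "\<forall>(u,v)\<in>D. nu u v \<in> I \<and> pu nu u v * pv nu u v \<noteq> 0 \<and> nu1 x u v = f (nu u v) \<and> nu2 x u v = g (nu u v)"
  using W by (elim conjE)

lemma oI: "open I" by (rule wdD1)
lemma nuI: "(u,v) \<in> D \<Longrightarrow> nu u v \<in> I" using wdD4 by blast
lemma nu1_eq: "(u,v) \<in> D \<Longrightarrow> nu1 x u v = f (nu u v)" using wdD4 by blast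
lemma nu2_eq: "(u,v) \<in> D \<Longrightarrow> nu2 x u v = g (nu u v)" using wdD4 by blast
lemma nunz: "(u,v) \<in> D \<Longrightarrow> pu nu u v * pv nu u v \<noteq> 0" using wdD4 by blast
lemma df: "t \<in> I \<Longrightarrow> (f has_real_derivative deriv f t) (at t)"
  using wdD2 DERIV_deriv_iff_real_differentiable by blast
lemma dg: "t \<in> I \<Longrightarrow> (g has_real_derivative deriv g t) (at t)"
  using wdD2 DERIV_deriv_iff_real_differentiable by blast
lemma fg: "t \<in> I \<Longrightarrow> f t - g t > 0" using wdD2 by blast
lemma fgnz: "t \<in> I \<Longrightarrow> deriv f t * deriv g t \<noteq> 0" using wdD2 by blast
lemma nudiff: "(\<lambda>(u,v). nu u v) differentiable_on D" by (rule wdD3)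
lemma srD: "(u,v) \<in> D \<Longrightarrow> (nu1 x u v - nu2 x u v) * gamma1 x u v * gamma2 x u v \<noteq> 0 \<and> nu1 x u v - nu2 x u v > 0"
  using sr unfolding strongly_regular_def by blast
lemma d12: "(u,v) \<in> D \<Longrightarrow> nu1 x u v - nu2 x u v > 0" using srD by blast

lemma nu_diff_at: "(u,v) \<in> D \<Longrightarrow> (\<lambda>(u,v). nu u v) differentiable (at (u,v))"
proof -
  assume p: "(u,v) \<in> D"
  have "(\<lambda>(u,v). nu u v) differentiable (at (u,v) within D)"
    using nudiff p unfolding differentiable_on_def by blast
  then show ?thesis using at_within_open[OF p oD] by simp
qed

lemma dnu_u: assumes "(u,v) \<in> D" shows "((\<lambda>s. nu s v) has_real_derivative pu nu u v) (at u)"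
proof -
  have "((\<lambda>(u,v). nu u v) \<circ> (\<lambda>s. (s,v))) differentiable (at u)"
  proof (rule differentiable_chain_at)
    have "((\<lambda>s. (s,v)) has_derivative (\<lambda>h. (h,0))) (at u)"
      by (rule has_derivative_Pair) (rule has_derivative_ident, rule has_derivative_const)
    then show "(\<lambda>s. (s,v)) differentiable (at u)" unfolding differentiable_def by blast
    show "(\<lambda>(u,v). nu u v) differentiable (at (u,v))" by (rule nu_diff_at[OF assms])
  qed
  then have "(\<lambda>s. nu s v) differentiable (at u)" by (simp add: o_def)
  then show ?thesis unfolding pu_def real_vd[symmetric] by (rule vector_derivative_works[THEN iffD1])
qed

lemma dnu_v: assumes "(u,v) \<in> D" shows "((\<lambda>t. nu u t) has_real_derivative pv nu u v) (at v)"
proof -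
  have "((\<lambda>(u,v). nu u v) \<circ> (\<lambda>t. (u,t))) differentiable (at v)"
  proof (rule differentiable_chain_at)
    have "((\<lambda>t. (u,t)) has_derivative (\<lambda>h. (0,h))) (at v)"
      by (rule has_derivative_Pair) (rule has_derivative_const, rule has_derivative_ident)
    then show "(\<lambda>t. (u,t)) differentiable (at v)" unfolding differentiable_def by blast
    show "(\<lambda>(u,v). nu u v) differentiable (at (u,v))" by (rule nu_diff_at[OF assms])
  qed
  then have "(\<lambda>t. nu u t) differentiable (at v)" by (simp add: o_def)
  then show ?thesis unfolding pv_def real_vd[symmetric] by (rule vector_derivative_works[THEN iffD1])
qed

lemma nu_cont: "continuous_on D (\<lambda>(u,v). nu u v)"
  using nudiff differentiable_imp_continuous_on by blast


lemma pu_nu1: assumes p: "(u,v) \<in> D" shows "pu (nu1 x) u v = deriv f (nu u v) * pu nu u v"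
proof -
  have "pu (nu1 x) u v = pu (\<lambda>u v. f (nu u v)) u v" by (rule pu_cong[OF oD _ p]) (use nu1_eq in auto)
  also have "\<dots> = deriv f (nu u v) * pu nu u v"
    by (rule pu_at) (simp add: real_vd DERIV_chain2[OF df[OF nuI[OF p]] dnu_u[OF p]])
  finally show ?thesis .
qed
lemma pv_nu1: assumes p: "(u,v) \<in> D" shows "pv (nu1 x) u v = deriv f (nu u v) * pv nu u v"
proof -
  have "pv (nu1 x) u v = pv (\<lambda>u v. f (nu u v)) u v" by (rule pv_cong[OF oD _ p]) (use nu1_eq in auto)
  also have "\<dots> = deriv f (nu u v) * pv nu u v"
    by (rule pv_at) (simp add: real_vd DERIV_chain2[OF df[OF nuI[OF p]] dnu_v[OF p]])
  finally show ?thesis .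
qed
lemma pu_nu2: assumes p: "(u,v) \<in> D" shows "pu (nu2 x) u v = deriv g (nu u v) * pu nu u v"
proof -
  have "pu (nu2 x) u v = pu (\<lambda>u v. g (nu u v)) u v" by (rule pu_cong[OF oD _ p]) (use nu2_eq in auto)
  also have "\<dots> = deriv g (nu u v) * pu nu u v"
    by (rule pu_at) (simp add: real_vd DERIV_chain2[OF dg[OF nuI[OF p]] dnu_u[OF p]])
  finally show ?thesis .
qed
lemma pv_nu2: assumes p: "(u,v) \<in> D" shows "pv (nu2 x) u v = deriv g (nu u v) * pv nu u v"
proof -
  have "pv (nu2 x) u v = pv (\<lambda>u v. g (nu u v)) u v" by (rule pv_cong[OF oD _ p]) (use nu2_eq in auto)
  also have "\<dots> = deriv g (nu u v) * pv nu u v"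
    by (rule pv_at) (simp add: real_vd DERIV_chain2[OF dg[OF nuI[OF p]] dnu_v[OF p]])
  finally show ?thesis .
qed

lemma th_du: assumes p: "(u,v) \<in> D"
  shows "((\<lambda>s. Phi (nu s v)) has_real_derivative pu (nu1 x) u v / (nu1 x u v - nu2 x u v)) (at u)"
proof -
  have "((\<lambda>s. Phi (nu s v)) has_real_derivative deriv f (nu u v) / (f (nu u v) - g (nu u v)) * pu nu u v) (at u)"
    using DERIV_chain2[OF dPhi[rule_format, OF nuI[OF p]] dnu_u[OF p]] .
  then show ?thesis using pu_nu1[OF p] nu1_eq[OF p] nu2_eq[OF p] by simp
qed
lemma th_dv: assumes p: "(u,v) \<in> D"
  shows "((\<lambda>t. Phi (nu u t)) has_real_derivative pv (nu1 x) u v / (nu1 x u v - nu2 x u v)) (at v)"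
proof -
  have "((\<lambda>t. Phi (nu u t)) has_real_derivative deriv f (nu u v) / (f (nu u v) - g (nu u v)) * pv nu u v) (at v)"
    using DERIV_chain2[OF dPhi[rule_format, OF nuI[OF p]] dnu_v[OF p]] .
  then show ?thesis using pv_nu1[OF p] nu1_eq[OF p] nu2_eq[OF p] by simp
qed
lemma ps_du: assumes p: "(u,v) \<in> D"
  shows "((\<lambda>s. Psi (nu s v)) has_real_derivative pu (nu2 x) u v / (nu2 x u v - nu1 x u v)) (at u)"
proof -
  have "((\<lambda>s. Psi (nu s v)) has_real_derivative deriv g (nu u v) / (g (nu u v) - f (nu u v)) * pu nu u v) (at u)"
    using DERIV_chain2[OF dPsi[rule_format, OF nuI[OF p]] dnu_u[OF p]] .
  then show ?thesis using pu_nu2[OF p] nu1_eq[OF p] nu2_eq[OF p] by simp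
qed
lemma ps_dv: assumes p: "(u,v) \<in> D"
  shows "((\<lambda>t. Psi (nu u t)) has_real_derivative pv (nu2 x) u v / (nu2 x u v - nu1 x u v)) (at v)"
proof -
  have "((\<lambda>t. Psi (nu u t)) has_real_derivative deriv g (nu u v) / (g (nu u v) - f (nu u v)) * pv nu u v) (at v)"
    using DERIV_chain2[OF dPsi[rule_format, OF nuI[OF p]] dnu_v[OF p]] .
  then show ?thesis using pv_nu2[OF p] nu1_eq[OF p] nu2_eq[OF p] by simp
qed

lemma Phi_cont: "continuous_on D (\<lambda>(u,v). Phi (nu u v))"
proof -
  have c: "continuous_on I Phi"
    by (rule continuous_at_imp_continuous_on) (use dPhi DERIV_isCont in blast)
  have "continuous_on D (\<lambda>p. Phi ((\<lambda>(u,v). nu u v) p))"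
    by (rule continuous_on_compose2[OF c nu_cont]) (use nuI in auto)
  then show ?thesis by (simp add: split_beta)
qed
lemma Psi_cont: "continuous_on D (\<lambda>(u,v). Psi (nu u v))"
proof -
  have c: "continuous_on I Psi"
    by (rule continuous_at_imp_continuous_on) (use dPsi DERIV_isCont in blast)
  have "continuous_on D (\<lambda>p. Psi ((\<lambda>(u,v). nu u v) p))"
    by (rule continuous_on_compose2[OF c nu_cont]) (use nuI in auto)
  then show ?thesis by (simp add: split_beta)
qed

lemma d12nz: "\<forall>(u,v)\<in>D. nu1 x u v - nu2 x u v \<noteq> 0" using d12 by force
lemma d21nz: "\<forall>(u,v)\<in>D. nu2 x u v - nu1 x u v \<noteq> 0" using d12 by force

lemma sm_theta: "smooth_on2 D (\<lambda>u v. Phi (nu u v))"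
  apply (rule sm_SucI[OF oD Phi_cont,
        where fu="\<lambda>u v. pu (nu1 x) u v / (nu1 x u v - nu2 x u v)" and fv="\<lambda>u v. pv (nu1 x) u v / (nu1 x u v - nu2 x u v)"])
  subgoal using th_du by (simp add: real_vd)
  subgoal using th_dv by (simp add: real_vd)
  subgoal by (rule sm_divide[OF oD sm_pu[OF sm_nu1] sm_diff[OF oD sm_nu1 sm_nu2] d12nz])
  subgoal by (rule sm_divide[OF oD sm_pv[OF sm_nu1] sm_diff[OF oD sm_nu1 sm_nu2] d12nz])
  done

lemma sm_psi: "smooth_on2 D (\<lambda>u v. Psi (nu u v))"
  apply (rule sm_SucI[OF oD Psi_cont,
        where fu="\<lambda>u v. pu (nu2 x) u v / (nu2 x u v - nu1 x u v)" and fv="\<lambda>u v. pv (nu2 x) u v / (nu2 x u v - nu1 x u v)"])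
  subgoal using ps_du by (simp add: real_vd)
  subgoal using ps_dv by (simp add: real_vd)
  subgoal by (rule sm_divide[OF oD sm_pu[OF sm_nu2] sm_diff[OF oD sm_nu2 sm_nu1] d21nz])
  subgoal by (rule sm_divide[OF oD sm_pv[OF sm_nu2] sm_diff[OF oD sm_nu2 sm_nu1] d21nz])
  done

lemma lam_fun: "lam x Phi nu = (\<lambda>u v. ln (sqrt (fE x u v)) + Phi (nu u v))" by (intro ext) (simp add: lam_def)
lemma mu_fun: "mu x Psi nu = (\<lambda>u v. ln (sqrt (fG x u v)) + Psi (nu u v))" by (intro ext) (simp add: mu_def)

lemma sm_lam: "smooth_on2 D (lam x Phi nu)"
  unfolding lam_fun
  by (rule sm_add[OF oD sm_ln[OF oD sm_sqrt[OF oD sm_E]] sm_theta]) (use Epos in auto)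
lemma sm_mu: "smooth_on2 D (mu x Psi nu)"
  unfolding mu_fun
  by (rule sm_add[OF oD sm_ln[OF oD sm_sqrt[OF oD sm_G]] sm_psi]) (use Gpos in auto)

lemma lnsqrt_deriv:
  assumes "(h has_real_derivative d) (at t)" "h t > 0"
  shows "((\<lambda>t. ln (sqrt (h t))) has_real_derivative d / (2 * h t)) (at t)"
proof -
  have s: "sqrt (h t) > 0" using assms(2) by simp
  have "((\<lambda>t. ln (sqrt (h t))) has_real_derivative inverse (sqrt (h t)) * (inverse (sqrt (h t)) / 2 * d)) (at t)"
    by (rule DERIV_chain2[OF DERIV_ln[OF s] DERIV_chain2[OF DERIV_real_sqrt[OF assms(2)] assms(1)]])
  moreover have "inverse (sqrt (h t)) * (inverse (sqrt (h t)) / 2 * d) = d / (2 * h t)"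
    using assms(2) by (simp add: field_simps)
  ultimately show ?thesis by (metis (no_types))
qed

lemma lam_v: assumes p: "(u,v) \<in> D" shows "pv (lam x Phi nu) u v = 0"
proof -
  have dE: "((\<lambda>t. fE x u t) has_real_derivative pv (fE x) u v) (at v)" using sm_dv[OF sm_E p] by (simp add: real_vd)
  have "((\<lambda>t. ln (sqrt (fE x u t)) + Phi (nu u t)) has_real_derivative
       pv (fE x) u v / (2 * fE x u v) + pv (nu1 x) u v / (nu1 x u v - nu2 x u v)) (at v)"
    by (rule DERIV_add[OF lnsqrt_deriv[OF dE Epos[OF p]] th_dv[OF p]])
  moreover have "pv (fE x) u v / (2 * fE x u v) + pv (nu1 x) u v / (nu1 x u v - nu2 x u v) = 0"
    using codazzi_facts(1)[OF p] d12[OF p] Epos[OF p] by (simp add: field_simps)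
  ultimately show ?thesis unfolding lam_fun by (intro pv_at) (simp add: real_vd)
qed

lemma mu_u: assumes p: "(u,v) \<in> D" shows "pu (mu x Psi nu) u v = 0"
proof -
  have dG: "((\<lambda>s. fG x s v) has_real_derivative pu (fG x) u v) (at u)" using sm_du[OF sm_G p] by (simp add: real_vd)
  have "((\<lambda>s. ln (sqrt (fG x s v)) + Psi (nu s v)) has_real_derivative
       pu (fG x) u v / (2 * fG x u v) + pu (nu2 x) u v / (nu2 x u v - nu1 x u v)) (at u)"
    by (rule DERIV_add[OF lnsqrt_deriv[OF dG Gpos[OF p]] ps_du[OF p]])
  moreover have "pu (fG x) u v / (2 * fG x u v) + pu (nu2 x) u v / (nu2 x u v - nu1 x u v) = 0"
    using codazzi_facts(2)[OF p] d12[OF p] Gpos[OF p] by (simp add: field_simps)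
  ultimately show ?thesis unfolding mu_fun by (intro pu_at) (simp add: real_vd)
qed

end



lemma repar1:
  fixes w :: "real \<Rightarrow> real"
  assumes ab: "a0 < a" "a < b" "b < b0" and cw: "continuous_on {a0..b0} w" and wp: "\<forall>u\<in>{a0..b0}. w u > 0"
  obtains P p where
    "\<And>u. u \<in> {a..b} \<Longrightarrow> (P has_real_derivative w u) (at u)"
    "P a < P b"
    "\<And>u. u \<in> {a<..<b} \<Longrightarrow> P u \<in> {P a<..<P b} \<and> p (P u) = u"
    "\<And>s. s \<in> {P a<..<P b} \<Longrightarrow> p s \<in> {a<..<b} \<and> P (p s) = s \<and> (p has_real_derivative inverse (w (p s))) (at s)"
proof -
  define P where "P u = integral {a0..u} w" for u
  have dP: "(P has_real_derivative w u) (at u)" if "u \<in> {a..b}" for u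
  proof -
    have u: "u \<in> {a0..b0}" using that ab by simp
    have d: "(P has_real_derivative w u) (at u within {a0..b0})"
      unfolding P_def by (rule integral_has_real_derivative[OF cw u])
    have i: "u \<in> interior {a0..b0}" using that ab by simp
    show ?thesis using d unfolding at_within_interior[OF i] .
  qed
  have cP: "isCont P u" if "u \<in> {a..b}" for u using dP[OF that] DERIV_isCont by blast
  have mono: "P x < P y" if "x < y" "x \<in> {a..b}" "y \<in> {a..b}" for x y
  proof (rule DERIV_pos_imp_increasing_open[OF that(1)])
    fix z assume "x < z" "z < y"
    then have z: "z \<in> {a..b}" using that by auto
    have "w z > 0" using wp z ab by auto
    then show "\<exists>d. DERIV P z :> d \<and> d > 0" using dP[OF z] by blast
  next
    show "continuous_on {x..y} P"
      by (rule continuous_at_imp_continuous_on) (use cP that in auto)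
  qed
  have inj: "inj_on P {a..b}"
  proof (rule inj_onI)
    fix x y assume xy: "x \<in> {a..b}" "y \<in> {a..b}" "P x = P y"
    show "x = y"
    proof (rule ccontr)
      assume "x \<noteq> y"
      then have "x < y \<or> y < x" by linarith
      then show False using mono[of x y] mono[of y x] xy by auto
    qed
  qed
  define p where "p = inv_into {a..b} P"
  have pP: "p (P z) = z" if "z \<in> {a..b}" for z using inv_into_f_f[OF inj that] p_def by simp
  have Pab: "P a < P b" using mono ab by auto
  show ?thesis
  proof
    show "\<And>u. u \<in> {a..b} \<Longrightarrow> (P has_real_derivative w u) (at u)" by (rule dP)
    show "P a < P b" by (rule Pab)
    fix u assume u: "u \<in> {a<..<b}"
    show "P u \<in> {P a<..<P b} \<and> p (P u) = u" using mono[of a u] mono[of u b] u pP[of u] by auto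
  next
    fix s assume s: "s \<in> {P a<..<P b}"
    have cPab: "continuous_on {a..b} P" by (rule continuous_at_imp_continuous_on) (use cP in blast)
    obtain u where u: "a \<le> u" "u \<le> b" "P u = s"
      using IVT'[of P a s b, OF _ _ _ cPab] s ab by auto
    have ua: "u \<noteq> a" "u \<noteq> b" using u s by auto
    have ps: "p s = u" using pP[of u] u by auto
    have cont: "isCont p s"
      using isCont_inverse_function2[where a=a and x=u and b=b and f=P and g=p] u ua pP cP by auto
    have "DERIV p s :> inverse (w (p s))"
    proof (rule DERIV_inverse_function[where a="P a" and b="P b"])
      show "DERIV P (p s) :> w (p s)" using dP[of u] ps u by auto
      have "p s \<in> {a0..b0}" using ps u ab by simp
      then show "w (p s) \<noteq> 0" using wp by (metis less_irrefl)
      show "P a < s" "s < P b" using s by auto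
      show "isCont p s" by (rule cont)
      fix y assume "P a < y" "y < P b"
      then obtain z where z: "a \<le> z" "z \<le> b" "P z = y"
        using IVT'[of P a y b, OF _ _ _ cPab] ab by auto
      then show "P (p y) = y" using pP[of z] by auto
    qed
    then show "p s \<in> {a<..<b} \<and> P (p s) = s \<and> (p has_real_derivative inverse (w (p s))) (at s)"
      using ps u ua by auto
  qed
qed


lemma cont_1var_s:
  fixes V :: "(real \<times> real) set"
  assumes "\<forall>(s,t)\<in>V. isCont p s"
  shows "continuous_on V (\<lambda>(s,t). (p s :: real))"
proof (rule continuous_at_imp_continuous_on, rule ballI)
  fix z assume z: "z \<in> V"
  obtain s t where zst: "z = (s,t)" by (cases z)
  have "isCont (p \<circ> fst) z" using assms z zst by (intro continuous_at_compose) (auto intro: continuous_intros)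
  moreover have "(\<lambda>(s,t::real). p s) = p \<circ> fst" by (auto simp: fun_eq_iff)
  ultimately show "isCont (\<lambda>(s,t::real). p s) z" by simp
qed

lemma cont_1var_t:
  fixes V :: "(real \<times> real) set"
  assumes "\<forall>(s,t)\<in>V. isCont q t"
  shows "continuous_on V (\<lambda>(s,t). (q t :: real))"
proof (rule continuous_at_imp_continuous_on, rule ballI)
  fix z assume z: "z \<in> V"
  obtain s t where zst: "z = (s,t)" by (cases z)
  have "isCont (q \<circ> snd) z" using assms z zst by (intro continuous_at_compose) (auto intro: continuous_intros)
  moreover have "(\<lambda>(s::real,t). q t) = q \<circ> snd" by (auto simp: fun_eq_iff)
  ultimately show "isCont (\<lambda>(s::real,t). q t) z" by simp
qed

lemma sm_1var_s:
  assumes oU: "open U" and oV: "open V" and h: "smooth_on2 U h" and m: "\<forall>(s,t)\<in>V. (p s, c) \<in> U"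
    and d: "\<forall>(s,t)\<in>V. (p has_real_derivative h (p s) c) (at s)"
  shows "smooth_on2 V (\<lambda>s t. p s)"
  unfolding smooth_on2_def
proof
  fix k show "Ck_on k V (\<lambda>s t. p s)"
  proof (induction k)
    case 0
    have "\<forall>(s,t)\<in>V. isCont p s" using d DERIV_isCont by blast
    then show ?case using cont_1var_s by simp
  next
    case (Suc k)
    have "\<forall>(s,t)\<in>V. isCont p s" using d DERIV_isCont by blast
    then have c: "continuous_on V (\<lambda>(s,t). p s)" using cont_1var_s by blast
    show ?case
    proof (rule Ck_SucI'[OF oV c, where fu="\<lambda>s t. h (p s) c" and fv="\<lambda>s t. 0"])
      fix s t assume "(s,t) \<in> V"
      then show "((\<lambda>s. p s) has_vector_derivative h (p s) c) (at s)" using d by (auto simp: real_vd)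
      show "((\<lambda>t. p s) has_vector_derivative 0) (at t)" by simp
    next
      show "Ck_on k V (\<lambda>s t. h (p s) c)"
        by (rule Ck_on_comp[OF oU oV sm_Ck[OF h] Suc.IH Ck_on_const m])
      show "Ck_on k V (\<lambda>s t. 0::real)" by (rule Ck_on_const)
    qed
  qed
qed

lemma sm_1var_t:
  assumes oU: "open U" and oV: "open V" and h: "smooth_on2 U h" and m: "\<forall>(s,t)\<in>V. (c, q t) \<in> U"
    and d: "\<forall>(s,t)\<in>V. (q has_real_derivative h c (q t)) (at t)"
  shows "smooth_on2 V (\<lambda>s t. q t)"
  unfolding smooth_on2_def
proof
  fix k show "Ck_on k V (\<lambda>s t. q t)"
  proof (induction k)
    case 0
    have "\<forall>(s,t)\<in>V. isCont q t" using d DERIV_isCont by blast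
    then show ?case using cont_1var_t by simp
  next
    case (Suc k)
    have "\<forall>(s,t)\<in>V. isCont q t" using d DERIV_isCont by blast
    then have c: "continuous_on V (\<lambda>(s,t). q t)" using cont_1var_t by blast
    show ?case
    proof (rule Ck_SucI'[OF oV c, where fu="\<lambda>s t. 0" and fv="\<lambda>s t. h c (q t)"])
      fix s t assume "(s,t) \<in> V"
      then show "((\<lambda>t. q t) has_vector_derivative h c (q t)) (at t)" using d by (auto simp: real_vd)
      show "((\<lambda>s. q t) has_vector_derivative 0) (at s)" by simp
    next
      show "Ck_on k V (\<lambda>s t. h c (q t))"
        by (rule Ck_on_comp[OF oU oV sm_Ck[OF h] Ck_on_const Suc.IH m])
      show "Ck_on k V (\<lambda>s t. 0::real)" by (rule Ck_on_const)
    qed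
  qed
qed

lemma sm_subset: "smooth_on2 D f \<Longrightarrow> D' \<subseteq> D \<Longrightarrow> smooth_on2 D' f"
proof -
  assume a: "smooth_on2 D f" "D' \<subseteq> D"
  have "Ck_on k D' f" if "Ck_on k D f" for k f
    using that
  proof (induction k arbitrary: f)
    case 0 then show ?case using a(2) continuous_on_subset by auto
  next
    case (Suc k)
    note d = Ck_SucD[OF Suc.prems]
    show ?case by (rule Ck_SucI) (use d Suc.IH a(2) continuous_on_subset in \<open>blast+\<close>)
  qed
  then show ?thesis using a(1) unfolding smooth_on2_def by blast
qed



locale reparam = wsurf +
  fixes U V :: "(real \<times> real) set" and p q al be :: "real \<Rightarrow> real"
  assumes oU: "open U" and oV: "open V" and UD: "U \<subseteq> D" and mV: "\<forall>(s,t)\<in>V. (p s, q t) \<in> U"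
    and smp: "smooth_on2 V (\<lambda>s t. p s)" and smq: "smooth_on2 V (\<lambda>s t. q t)"
    and dp: "\<forall>(s,t)\<in>V. (p has_real_derivative al s) (at s) \<and> al s > 0"
    and dq: "\<forall>(s,t)\<in>V. (q has_real_derivative be t) (at t) \<and> be t > 0"
begin

lemma mD: "(s,t) \<in> V \<Longrightarrow> (p s, q t) \<in> D" using mV UD by blast
lemma mU: "(s,t) \<in> V \<Longrightarrow> (p s, q t) \<in> U" using mV by blast
lemma dps: "(s,t) \<in> V \<Longrightarrow> (p has_vector_derivative al s) (at s)" using dp by (auto simp: real_vd)
lemma dqt: "(s,t) \<in> V \<Longrightarrow> (q has_vector_derivative be t) (at t)" using dq by (auto simp: real_vd)
lemma alp: "(s,t) \<in> V \<Longrightarrow> al s > 0" using dp by blast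
lemma bep: "(s,t) \<in> V \<Longrightarrow> be t > 0" using dq by blast

lemma pu_p: "(s,t) \<in> V \<Longrightarrow> pu (\<lambda>s t. p s) s t = al s"
  by (rule pu_at) (use dps in auto)
lemma pv_q: "(s,t) \<in> V \<Longrightarrow> pv (\<lambda>s t. q t) s t = be t"
  by (rule pv_at) (use dqt in auto)

lemma sm_al: "smooth_on2 V (\<lambda>s t. al s)"
  by (rule sm_cong[OF oV _ sm_pu[OF smp]]) (use pu_p in auto)
lemma sm_be: "smooth_on2 V (\<lambda>s t. be t)"
  by (rule sm_cong[OF oV _ sm_pv[OF smq]]) (use pv_q in auto)

definition "al' s t = pu (\<lambda>s t. al s) s t"
definition "be' s t = pv (\<lambda>s t. be t) s t"
lemma dal: "(s,t) \<in> V \<Longrightarrow> ((\<lambda>s. al s) has_vector_derivative al' s t) (at s)"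
  unfolding al'_def using sm_du[OF sm_al] by blast
lemma dbe: "(s,t) \<in> V \<Longrightarrow> ((\<lambda>t. be t) has_vector_derivative be' s t) (at t)"
  unfolding be'_def using sm_dv[OF sm_be] by blast

lemma sm_compV: "smooth_on2 D X \<Longrightarrow> smooth_on2 V (\<lambda>s t. X (p s) (q t))"
  by (rule sm_comp[OF oU oV sm_subset[OF _ UD] smp smq mV])

lemma chain_s:
  assumes X: "smooth_on2 D X" and st: "(s,t) \<in> V"
  shows "((\<lambda>s. X (p s) (q t)) has_vector_derivative al s *\<^sub>R pu X (p s) (q t)) (at s)"
proof -
  have "((\<lambda>u. X u (q t)) \<circ> p has_vector_derivative al s *\<^sub>R pu X (p s) (q t)) (at s)"
    by (rule vector_diff_chain_at[OF dps[OF st]]) (rule sm_du[OF X mD[OF st]])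
  then show ?thesis by (simp add: o_def)
qed

lemma chain_t:
  assumes X: "smooth_on2 D X" and st: "(s,t) \<in> V"
  shows "((\<lambda>t. X (p s) (q t)) has_vector_derivative be t *\<^sub>R pv X (p s) (q t)) (at t)"
proof -
  have "((\<lambda>v. X (p s) v) \<circ> q has_vector_derivative be t *\<^sub>R pv X (p s) (q t)) (at t)"
    by (rule vector_diff_chain_at[OF dqt[OF st]]) (rule sm_dv[OF X mD[OF st]])
  then show ?thesis by (simp add: o_def)
qed

abbreviation "y \<equiv> (\<lambda>s t. x (p s) (q t))"

lemma Y1: "(s,t) \<in> V \<Longrightarrow> pu y s t = al s *\<^sub>R pu x (p s) (q t)"
  by (rule pu_at) (rule chain_s[OF smx])
lemma Y2: "(s,t) \<in> V \<Longrightarrow> pv y s t = be t *\<^sub>R pv x (p s) (q t)"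
  by (rule pv_at) (rule chain_t[OF smx])

lemma Y1f: "\<forall>(s,t)\<in>V. pu y s t = al s *\<^sub>R pu x (p s) (q t)" using Y1 by blast
lemma Y2f: "\<forall>(s,t)\<in>V. pv y s t = be t *\<^sub>R pv x (p s) (q t)" using Y2 by blast

lemma Y11: assumes st: "(s,t) \<in> V"
  shows "pu (pu y) s t = al' s t *\<^sub>R pu x (p s) (q t) + al s *\<^sub>R (al s *\<^sub>R pu (pu x) (p s) (q t))"
proof -
  have "pu (pu y) s t = pu (\<lambda>s t. al s *\<^sub>R pu x (p s) (q t)) s t" by (rule pu_cong[OF oV Y1f st])
  also have "\<dots> = al' s t *\<^sub>R pu x (p s) (q t) + al s *\<^sub>R (al s *\<^sub>R pu (pu x) (p s) (q t))"
    apply (rule pu_at)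
    using bounded_bilinear.has_vector_derivative[OF bounded_bilinear_scaleR dal[OF st] chain_s[OF sm_xu st]]
    by (simp add: add.commute)
  finally show ?thesis .
qed

lemma Y12: assumes st: "(s,t) \<in> V"
  shows "pv (pu y) s t = al s *\<^sub>R (be t *\<^sub>R pv (pu x) (p s) (q t))"
proof -
  have "pv (pu y) s t = pv (\<lambda>s t. al s *\<^sub>R pu x (p s) (q t)) s t" by (rule pv_cong[OF oV Y1f st])
  also have "\<dots> = al s *\<^sub>R (be t *\<^sub>R pv (pu x) (p s) (q t))"
    apply (rule pv_at)
    using bounded_linear.has_vector_derivative[OF bounded_linear_scaleR_right chain_t[OF sm_xu st], of "al s"]
    by simp
  finally show ?thesis .
qed

lemma Y22: assumes st: "(s,t) \<in> V"
  shows "pv (pv y) s t = be' s t *\<^sub>R pv x (p s) (q t) + be t *\<^sub>R (be t *\<^sub>R pv (pv x) (p s) (q t))"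
proof -
  have "pv (pv y) s t = pv (\<lambda>s t. be t *\<^sub>R pv x (p s) (q t)) s t" by (rule pv_cong[OF oV Y2f st])
  also have "\<dots> = be' s t *\<^sub>R pv x (p s) (q t) + be t *\<^sub>R (be t *\<^sub>R pv (pv x) (p s) (q t))"
    apply (rule pv_at)
    using bounded_bilinear.has_vector_derivative[OF bounded_bilinear_scaleR dbe[OF st] chain_t[OF sm_xv st]]
    by (simp add: add.commute)
  finally show ?thesis .
qed

end



context reparam
begin

lemma Ey: "(s,t) \<in> V \<Longrightarrow> fE y s t = (al s)^2 * fE x (p s) (q t)"
  by (simp add: fE_def Y1 power2_eq_square)
lemma Fy: "(s,t) \<in> V \<Longrightarrow> fF y s t = al s * be t * fF x (p s) (q t)"
  by (simp add: fF_def Y1 Y2)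
lemma Gy: "(s,t) \<in> V \<Longrightarrow> fG y s t = (be t)^2 * fG x (p s) (q t)"
  by (simp add: fG_def Y2 power2_eq_square)
lemma cy: "(s,t) \<in> V \<Longrightarrow> cross3 (pu y s t) (pv y s t) = (al s * be t) *\<^sub>R cross3 (pu x (p s) (q t)) (pv x (p s) (q t))"
  by (simp add: Y1 Y2 cross_mult_left cross_mult_right)
lemma ny: assumes st: "(s,t) \<in> V" shows "unit_normal y s t = unit_normal x (p s) (q t)"
proof -
  have pos: "al s * be t > 0" using alp[OF st] bep[OF st] by simp
  have nz: "al s \<noteq> 0" "be t \<noteq> 0" using alp[OF st] bep[OF st] by auto
  show ?thesis unfolding unit_normal_def cy[OF st] using pos nz by (simp add: abs_of_pos)
qed
lemma Ly: assumes st: "(s,t) \<in> V" shows "fL y s t = (al s)^2 * fL x (p s) (q t)"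
proof -
  have z: "inner (pu x (p s) (q t)) (unit_normal x (p s) (q t)) = 0" using n_xu by (simp add: inner_commute)
  show ?thesis unfolding fL_def Y11[OF st] ny[OF st] inner_add_left inner_scaleR_left z
    by (simp add: power2_eq_square)
qed
lemma My: assumes st: "(s,t) \<in> V" shows "fM y s t = al s * be t * fM x (p s) (q t)"
  unfolding fM_def Y12[OF st] ny[OF st] by simp
lemma Ny: assumes st: "(s,t) \<in> V" shows "fN y s t = (be t)^2 * fN x (p s) (q t)"
proof -
  have z: "inner (pv x (p s) (q t)) (unit_normal x (p s) (q t)) = 0" using n_xv by (simp add: inner_commute)
  show ?thesis unfolding fN_def Y22[OF st] ny[OF st] inner_add_left inner_scaleR_left z
    by (simp add: power2_eq_square)
qed
lemma nu1y: assumes st: "(s,t) \<in> V" shows "nu1 y s t = nu1 x (p s) (q t)"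
  using alp[OF st] unfolding nu1_def Ly[OF st] Ey[OF st] by simp
lemma nu2y: assumes st: "(s,t) \<in> V" shows "nu2 y s t = nu2 x (p s) (q t)"
  using bep[OF st] unfolding nu2_def Ny[OF st] Gy[OF st] by simp

lemma Eyv: assumes st: "(s,t) \<in> V" shows "pv (fE y) s t = (al s)^2 * (be t * pv (fE x) (p s) (q t))"
proof -
  have "pv (fE y) s t = pv (\<lambda>s t. (al s)^2 * fE x (p s) (q t)) s t" by (rule pv_cong[OF oV _ st]) (use Ey in auto)
  also have "\<dots> = (al s)^2 * (be t * pv (fE x) (p s) (q t))"
    apply (rule pv_at)
    using bounded_linear.has_vector_derivative[OF bounded_linear_mult_right chain_t[OF sm_E st], of "(al s)^2"]
    by simp
  finally show ?thesis .
qed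
lemma Gyu: assumes st: "(s,t) \<in> V" shows "pu (fG y) s t = (be t)^2 * (al s * pu (fG x) (p s) (q t))"
proof -
  have "pu (fG y) s t = pu (\<lambda>s t. (be t)^2 * fG x (p s) (q t)) s t" by (rule pu_cong[OF oV _ st]) (use Gy in auto)
  also have "\<dots> = (be t)^2 * (al s * pu (fG x) (p s) (q t))"
    apply (rule pu_at)
    using bounded_linear.has_vector_derivative[OF bounded_linear_mult_right chain_s[OF sm_G st], of "(be t)^2"]
    by simp
  finally show ?thesis .
qed

lemma g1y: assumes st: "(s,t) \<in> V" shows "gamma1 y s t = gamma1 x (p s) (q t)"
proof -
  have a: "al s > 0" and b: "be t > 0" using alp[OF st] bep[OF st] .
  have E: "fE x (p s) (q t) > 0" and G: "fG x (p s) (q t) > 0" using Epos Gpos mD[OF st] by auto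
  have sq: "sqrt ((be t)^2 * fG x (p s) (q t)) = be t * sqrt (fG x (p s) (q t))"
    using b G by (simp add: real_sqrt_mult)
  show ?thesis unfolding gamma1_def Eyv[OF st] Ey[OF st] Gy[OF st] sq using a b E G
    by (simp add: field_simps power2_eq_square)
qed
lemma g2y: assumes st: "(s,t) \<in> V" shows "gamma2 y s t = gamma2 x (p s) (q t)"
proof -
  have a: "al s > 0" and b: "be t > 0" using alp[OF st] bep[OF st] .
  have E: "fE x (p s) (q t) > 0" and G: "fG x (p s) (q t) > 0" using Epos Gpos mD[OF st] by auto
  have sq: "sqrt ((al s)^2 * fE x (p s) (q t)) = al s * sqrt (fE x (p s) (q t))"
    using a E by (simp add: real_sqrt_mult)
  show ?thesis unfolding gamma2_def Gyu[OF st] Ey[OF st] Gy[OF st] sq using a b E G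
    by (simp add: field_simps power2_eq_square)
qed

lemma lamy: assumes st: "(s,t) \<in> V"
  shows "lam y Phi (\<lambda>s t. nu (p s) (q t)) s t = ln (al s) + lam x Phi nu (p s) (q t)"
proof -
  have a: "al s > 0" using alp[OF st] .
  have E: "fE x (p s) (q t) > 0" using Epos mD[OF st] by auto
  have "sqrt ((al s)^2 * fE x (p s) (q t)) = al s * sqrt (fE x (p s) (q t))"
    using a E by (simp add: real_sqrt_mult)
  then show ?thesis unfolding lam_def Ey[OF st] using a E by (simp add: ln_mult)
qed
lemma muy: assumes st: "(s,t) \<in> V"
  shows "mu y Psi (\<lambda>s t. nu (p s) (q t)) s t = ln (be t) + mu x Psi nu (p s) (q t)"
proof -
  have b: "be t > 0" using bep[OF st] .
  have G: "fG x (p s) (q t) > 0" using Gpos mD[OF st] by auto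
  have "sqrt ((be t)^2 * fG x (p s) (q t)) = be t * sqrt (fG x (p s) (q t))"
    using b G by (simp add: real_sqrt_mult)
  then show ?thesis unfolding mu_def Gy[OF st] using b G by (simp add: ln_mult)
qed


lemma nuy_u: assumes st: "(s,t) \<in> V" shows "pu (\<lambda>s t. nu (p s) (q t)) s t = al s * pu nu (p s) (q t)"
proof -
  have "((\<lambda>s. nu (p s) (q t)) has_real_derivative pu nu (p s) (q t) * al s) (at s)"
    using DERIV_chain2[where f="\<lambda>u. nu u (q t)" and g=p and x=s, OF dnu_u[OF mD[OF st]]] dp st by blast
  then show ?thesis by (intro pu_at) (simp add: real_vd mult.commute)
qed
lemma nuy_v: assumes st: "(s,t) \<in> V" shows "pv (\<lambda>s t. nu (p s) (q t)) s t = be t * pv nu (p s) (q t)"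
proof -
  have "((\<lambda>t. nu (p s) (q t)) has_real_derivative pv nu (p s) (q t) * be t) (at t)"
    using DERIV_chain2[where f="\<lambda>v. nu (p s) v" and g=q and x=t, OF dnu_v[OF mD[OF st]]] dq st by blast
  then show ?thesis by (intro pv_at) (simp add: real_vd mult.commute)
qed

lemma nuy_diff: "(\<lambda>(s,t). nu (p s) (q t)) differentiable_on V"
  unfolding differentiable_on_def
proof
  fix z assume z: "z \<in> V"
  obtain s t where zst: "z = (s,t)" by (cases z)
  have st: "(s,t) \<in> V" using z zst by simp
  have dp1: "(p has_derivative (\<lambda>h. al s * h)) (at (fst (s,t)))" using dp st by (auto simp: has_field_derivative_def)
  have dq1: "(q has_derivative (\<lambda>h. be t * h)) (at (snd (s,t)))" using dq st by (auto simp: has_field_derivative_def)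
  have d1: "((\<lambda>z. p (fst z)) has_derivative (\<lambda>h. al s * fst h)) (at (s,t))"
    by (rule has_derivative_compose[OF has_derivative_fst[OF has_derivative_ident] dp1])
  have d2: "((\<lambda>z. q (snd z)) has_derivative (\<lambda>h. be t * snd h)) (at (s,t))"
    by (rule has_derivative_compose[OF has_derivative_snd[OF has_derivative_ident] dq1])
  have "(\<lambda>z. (p (fst z), q (snd z))) differentiable (at (s,t))"
    using has_derivative_Pair[OF d1 d2] unfolding differentiable_def by blast
  moreover have "(\<lambda>(u,v). nu u v) differentiable (at (p (fst (s,t)), q (snd (s,t))))"
    using nu_diff_at[OF mD[OF st]] by simp
  ultimately have "((\<lambda>(u,v). nu u v) \<circ> (\<lambda>z. (p (fst z), q (snd z)))) differentiable (at (s,t))"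
    by (rule differentiable_chain_at)
  moreover have "((\<lambda>(u,v). nu u v) \<circ> (\<lambda>z. (p (fst z), q (snd z)))) = (\<lambda>(s,t). nu (p s) (q t))"
    by (auto simp: fun_eq_iff)
  ultimately show "(\<lambda>(s,t). nu (p s) (q t)) differentiable (at z within V)"
    using zst by (auto intro: differentiable_at_withinI)
qed

lemma y_regular: "regular_surface V y"
  unfolding regular_surface_def
proof (intro conjI)
  show "open V" by (rule oV)
  show "smooth_on2 V y" by (rule sm_compV[OF smx])
  show "\<forall>(s,t)\<in>V. cross3 (pu y s t) (pv y s t) \<noteq> 0"
  proof (clarify)
    fix s t assume st: "(s,t) \<in> V" and c: "cross3 (pu y s t) (pv y s t) = 0"
    have "al s * be t \<noteq> 0" using alp[OF st] bep[OF st] by simp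
    then show False using c cy[OF st] cne[OF mD[OF st]] by simp
  qed
qed

lemma y_principal: "principal_params V y"
  unfolding principal_params_def
proof (clarify)
  fix s t assume st: "(s,t) \<in> V"
  show "fF y s t = 0 \<and> fM y s t = 0"
    using Fy[OF st] My[OF st] Fz Mz mD[OF st] by auto
qed

lemma y_sr: "strongly_regular V y"
  unfolding strongly_regular_def
proof (clarify)
  fix s t assume st: "(s,t) \<in> V"
  show "(nu1 y s t - nu2 y s t) * gamma1 y s t * gamma2 y s t \<noteq> 0 \<and> nu1 y s t - nu2 y s t > 0"
    unfolding nu1y[OF st] nu2y[OF st] g1y[OF st] g2y[OF st] using srD[OF mD[OF st]] by blast
qed

lemma y_wd: "weingarten_data V y I f g (\<lambda>s t. nu (p s) (q t))"
  unfolding weingarten_data_def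
proof (intro conjI)
  show "open I" by (rule oI)
  show "\<forall>t\<in>I. f differentiable (at t) \<and> g differentiable (at t) \<and> f t - g t > 0 \<and> deriv f t * deriv g t \<noteq> 0"
    by (rule wdD2)
  show "(\<lambda>(u,v). nu (p u) (q v)) differentiable_on V" by (rule nuy_diff)
  show "\<forall>(u,v)\<in>V. nu (p u) (q v) \<in> I \<and> pu (\<lambda>s t. nu (p s) (q t)) u v * pv (\<lambda>s t. nu (p s) (q t)) u v \<noteq> 0 \<and>
      nu1 y u v = f (nu (p u) (q v)) \<and> nu2 y u v = g (nu (p u) (q v))"
  proof (clarify)
    fix s t assume st: "(s,t) \<in> V"
    have a: "al s \<noteq> 0" "be t \<noteq> 0" using alp[OF st] bep[OF st] by auto
    show "nu (p s) (q t) \<in> I \<and> pu (\<lambda>s t. nu (p s) (q t)) s t * pv (\<lambda>s t. nu (p s) (q t)) s t \<noteq> 0 \<and>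
      nu1 y s t = f (nu (p s) (q t)) \<and> nu2 y s t = g (nu (p s) (q t))"
      unfolding nuy_u[OF st] nuy_v[OF st] nu1y[OF st] nu2y[OF st]
      using nuI[OF mD[OF st]] nunz[OF mD[OF st]] nu1_eq[OF mD[OF st]] nu2_eq[OF mD[OF st]] a by simp
  qed
qed

end



lemma const_interval:
  fixes \<phi> :: "real \<Rightarrow> real"
  assumes "\<And>t. min a b \<le> t \<Longrightarrow> t \<le> max a b \<Longrightarrow> (\<phi> has_real_derivative 0) (at t)"
  shows "\<phi> a = \<phi> b"
proof (cases a b rule: linorder_cases)
  case less
  obtain z where "\<phi> b - \<phi> a = (b - a) * 0"
    using MVT2[of a b \<phi> "\<lambda>_. 0"] less assms by force
  then show ?thesis by simp
next
  case equal then show ?thesis by simp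
next
  case greater
  obtain z where "\<phi> a - \<phi> b = (a - b) * 0"
    using MVT2[of b a \<phi> "\<lambda>_. 0"] greater assms by force
  then show ?thesis by simp
qed

context wsurf
begin

lemma box_in:
  assumes "(u0,v0) \<in> D"
  obtains d where "d > 0" "\<And>u v. \<bar>u - u0\<bar> \<le> 2*d \<Longrightarrow> \<bar>v - v0\<bar> \<le> 2*d \<Longrightarrow> (u,v) \<in> D"
proof -
  obtain r where r: "r > 0" "ball (u0,v0) r \<subseteq> D" using oD assms openE by blast
  show ?thesis
  proof
    show "r/8 > 0" using r by simp
    fix u v assume "\<bar>u - u0\<bar> \<le> 2*(r/8)" "\<bar>v - v0\<bar> \<le> 2*(r/8)"
    then have "dist (u,v) (u0,v0) \<le> 2*(2*(r/8))" by (rule sq_dist)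
    then have "(u,v) \<in> ball (u0,v0) r" using r by (simp add: dist_commute)
    then show "(u,v) \<in> D" using r by blast
  qed
qed


lemma main:
  assumes p0: "(u0,v0) \<in> D"
  shows "\<exists>U V p q. (u0, v0) \<in> U \<and> U \<subseteq> D \<and> param_change V U p q \<and>
           (let y = (\<lambda>s t. x (p s t) (q s t)); nu' = (\<lambda>s t. nu (p s t) (q s t)) in
              regular_surface V y \<and> principal_params V y \<and> strongly_regular V y \<and>
              weingarten_data V y I f g nu' \<and> geometric_params V y Phi Psi nu')"
proof -
  obtain d where d: "d > 0" and inD: "\<And>u v. \<bar>u - u0\<bar> \<le> 2*d \<Longrightarrow> \<bar>v - v0\<bar> \<le> 2*d \<Longrightarrow> (u,v) \<in> D"
    using box_in[OF p0] by blast
  define Lm where "Lm = lam x Phi nu"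
  define Mm where "Mm = mu x Psi nu"
  have smL: "smooth_on2 D Lm" unfolding Lm_def by (rule sm_lam)
  have smM: "smooth_on2 D Mm" unfolding Mm_def by (rule sm_mu)
  have Lc: "Lm u v = Lm u v0" if uv: "\<bar>u - u0\<bar> \<le> 2*d" "\<bar>v - v0\<bar> \<le> 2*d" for u v
  proof (rule const_interval[where \<phi>="\<lambda>t. Lm u t" and a=v and b=v0])
    fix t assume t: "min v v0 \<le> t" "t \<le> max v v0"
    have ut: "(u,t) \<in> D" using t uv d by (intro inD) (auto simp: abs_le_iff)
    have "((\<lambda>t. Lm u t) has_vector_derivative pv Lm u t) (at t)" by (rule sm_dv[OF smL ut])
    then show "((\<lambda>t. Lm u t) has_real_derivative 0) (at t)" using lam_v[OF ut] by (simp add: real_vd Lm_def)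
  qed
  have Mc: "Mm u v = Mm u0 v" if uv: "\<bar>u - u0\<bar> \<le> 2*d" "\<bar>v - v0\<bar> \<le> 2*d" for u v
  proof (rule const_interval[where \<phi>="\<lambda>s. Mm s v" and a=u and b=u0])
    fix t assume t: "min u u0 \<le> t" "t \<le> max u u0"
    have ut: "(t,v) \<in> D" using t uv d by (intro inD) (auto simp: abs_le_iff)
    have "((\<lambda>s. Mm s v) has_vector_derivative pu Mm t v) (at t)" by (rule sm_du[OF smM ut])
    then show "((\<lambda>s. Mm s v) has_real_derivative 0) (at t)" using mu_u[OF ut] by (simp add: real_vd Mm_def)
  qed
  define w1 where "w1 u = exp (Lm u v0)" for u
  define w2 where "w2 v = exp (Mm u0 v)" for v
  have cw1: "continuous_on {u0-2*d..u0+2*d} w1"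
  proof (rule continuous_at_imp_continuous_on, rule ballI)
    fix u assume u: "u \<in> {u0-2*d..u0+2*d}"
    have ud: "(u,v0) \<in> D" using u d by (intro inD) (auto simp: abs_le_iff)
    have "((\<lambda>s. Lm s v0) has_vector_derivative pu Lm u v0) (at u)" by (rule sm_du[OF smL ud])
    then have "isCont (\<lambda>s. Lm s v0) u" by (simp add: real_vd DERIV_isCont)
    then show "isCont w1 u" unfolding w1_def by (intro continuous_intros)
  qed
  have cw2: "continuous_on {v0-2*d..v0+2*d} w2"
  proof (rule continuous_at_imp_continuous_on, rule ballI)
    fix v assume v: "v \<in> {v0-2*d..v0+2*d}"
    have ud: "(u0,v) \<in> D" using v d by (intro inD) (auto simp: abs_le_iff)
    have "((\<lambda>t. Mm u0 t) has_vector_derivative pv Mm u0 v) (at v)" by (rule sm_dv[OF smM ud])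
    then have "isCont (\<lambda>t. Mm u0 t) v" by (simp add: real_vd DERIV_isCont)
    then show "isCont w2 v" unfolding w2_def by (intro continuous_intros)
  qed
  obtain P p where
    P1: "\<And>u. u \<in> {u0-d..u0+d} \<Longrightarrow> (P has_real_derivative w1 u) (at u)" and
    P2: "P (u0-d) < P (u0+d)" and
    P3: "\<And>u. u \<in> {u0-d<..<u0+d} \<Longrightarrow> P u \<in> {P (u0-d)<..<P (u0+d)} \<and> p (P u) = u" and
    P4: "\<And>s. s \<in> {P (u0-d)<..<P (u0+d)} \<Longrightarrow> p s \<in> {u0-d<..<u0+d} \<and> P (p s) = s \<and> (p has_real_derivative inverse (w1 (p s))) (at s)"
    by (rule repar1[of "u0-2*d" "u0-d" "u0+d" "u0+2*d" w1]) (use d cw1 in \<open>auto simp: w1_def\<close>)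
  obtain Q q where
    Q1: "\<And>v. v \<in> {v0-d..v0+d} \<Longrightarrow> (Q has_real_derivative w2 v) (at v)" and
    Q2: "Q (v0-d) < Q (v0+d)" and
    Q3: "\<And>v. v \<in> {v0-d<..<v0+d} \<Longrightarrow> Q v \<in> {Q (v0-d)<..<Q (v0+d)} \<and> q (Q v) = v" and
    Q4: "\<And>t. t \<in> {Q (v0-d)<..<Q (v0+d)} \<Longrightarrow> q t \<in> {v0-d<..<v0+d} \<and> Q (q t) = t \<and> (q has_real_derivative inverse (w2 (q t))) (at t)"
    by (rule repar1[of "v0-2*d" "v0-d" "v0+d" "v0+2*d" w2]) (use d cw2 in \<open>auto simp: w2_def\<close>)
  define U where "U = {u0-d<..<u0+d} \<times> {v0-d<..<v0+d}"
  define V where "V = {P (u0-d)<..<P (u0+d)} \<times> {Q (v0-d)<..<Q (v0+d)}"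
  define al where "al s = inverse (w1 (p s))" for s
  define be where "be t = inverse (w2 (q t))" for t
  have oU: "open U" unfolding U_def by (intro open_Times) auto
  have oV: "open V" unfolding V_def by (intro open_Times) auto
  have UK: "\<bar>u - u0\<bar> \<le> 2*d \<and> \<bar>v - v0\<bar> \<le> 2*d" if "(u,v) \<in> U" for u v
    using that d unfolding U_def by (auto simp: abs_le_iff)
  have UD: "U \<subseteq> D" using UK inD by auto
  have mV: "\<forall>(s,t)\<in>V. (p s, q t) \<in> U" using P4 Q4 unfolding U_def V_def by auto
  have mV1: "\<forall>(s,t)\<in>V. (p s, v0) \<in> U" using P4 d unfolding U_def V_def by auto
  have mV2: "\<forall>(s,t)\<in>V. (u0, q t) \<in> U" using Q4 d unfolding U_def V_def by auto
  have smh1: "smooth_on2 U (\<lambda>u v. exp (- Lm u v))" by (rule sm_subset[OF sm_exp[OF oD sm_neg[OF oD smL]] UD])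
  have smh2: "smooth_on2 U (\<lambda>u v. exp (- Mm u v))" by (rule sm_subset[OF sm_exp[OF oD sm_neg[OF oD smM]] UD])
  have dp: "\<forall>(s,t)\<in>V. (p has_real_derivative al s) (at s) \<and> al s > 0"
    using P4 unfolding V_def al_def w1_def by auto
  have dq: "\<forall>(s,t)\<in>V. (q has_real_derivative be t) (at t) \<and> be t > 0"
    using Q4 unfolding V_def be_def w2_def by auto
  have dp2: "\<forall>(s,t)\<in>V. (p has_real_derivative (\<lambda>u v. exp (- Lm u v)) (p s) v0) (at s)"
    using P4 unfolding V_def w1_def by (auto simp: exp_minus)
  have dq2: "\<forall>(s,t)\<in>V. (q has_real_derivative (\<lambda>u v. exp (- Mm u v)) u0 (q t)) (at t)"
    using Q4 unfolding V_def w2_def by (auto simp: exp_minus)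
  have smp: "smooth_on2 V (\<lambda>s t. p s)" by (rule sm_1var_s[OF oU oV smh1 mV1 dp2])
  have smq: "smooth_on2 V (\<lambda>s t. q t)" by (rule sm_1var_t[OF oU oV smh2 mV2 dq2])
  interpret R: reparam D x I f g Phi Psi nu U V p q al be
    by (rule reparam.intro[OF wsurf_axioms])
       (unfold_locales, fact oU, fact oV, fact UD, fact mV, fact smp, fact smq, fact dp, fact dq)
  have dP: "(P has_real_derivative exp (Lm u v)) (at u)" if "(u,v) \<in> U" for u v
  proof -
    have "u \<in> {u0-d..u0+d}" using that unfolding U_def by auto
    moreover have "Lm u v = Lm u v0" using Lc UK[OF that] by blast
    ultimately show ?thesis using P1 unfolding w1_def by auto
  qed
  have dQ: "(Q has_real_derivative exp (Mm u v)) (at v)" if "(u,v) \<in> U" for u v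
  proof -
    have "v \<in> {v0-d..v0+d}" using that unfolding U_def by auto
    moreover have "Mm u v = Mm u0 v" using Mc UK[OF that] by blast
    ultimately show ?thesis using Q1 unfolding w2_def by auto
  qed
  have smP: "smooth_on2 U (\<lambda>u v. P u)"
  proof (rule sm_SucI[OF oU _ _ _ sm_subset[OF sm_exp[OF oD smL] UD] sm_const[of U "0::real"]])
    show "continuous_on U (\<lambda>(u,v). P u)" by (rule cont_1var_s) (use dP DERIV_isCont in blast)
    fix u v assume "(u,v) \<in> U"
    then show "((\<lambda>s. P s) has_vector_derivative exp (Lm u v)) (at u)" using dP by (simp add: real_vd)
    show "((\<lambda>t. P u) has_vector_derivative 0) (at v)" by simp
  qed
  have smQ: "smooth_on2 U (\<lambda>u v. Q v)"
  proof (rule sm_SucI[OF oU _ _ _ sm_const[of U "0::real"] sm_subset[OF sm_exp[OF oD smM] UD]])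
    show "continuous_on U (\<lambda>(u,v). Q v)" by (rule cont_1var_t) (use dQ DERIV_isCont in blast)
    fix u v assume "(u,v) \<in> U"
    then show "((\<lambda>t. Q t) has_vector_derivative exp (Mm u v)) (at v)" using dQ by (simp add: real_vd)
    show "((\<lambda>s. Q v) has_vector_derivative 0) (at u)" by simp
  qed
  have bij: "bij_betw (\<lambda>(s,t). (p s, q t)) V U"
    unfolding bij_betw_def
  proof (intro conjI)
    show "inj_on (\<lambda>(s,t). (p s, q t)) V"
    proof (rule inj_onI)
      fix z z' assume a: "z \<in> V" "z' \<in> V" "(\<lambda>(s,t). (p s, q t)) z = (\<lambda>(s,t). (p s, q t)) z'"
      obtain s t s' t' where zz: "z = (s,t)" "z' = (s',t')" by (cases z, cases z')
      have e: "s = P (p s)" "s' = P (p s')" "t = Q (q t)" "t' = Q (q t')"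
        using a(1,2) zz P4 Q4 unfolding V_def by auto
      have "p s = p s'" "q t = q t'" using a(3) zz by auto
      then have "s = s'" "t = t'" using e by metis+
      then show "z = z'" using zz by simp
    qed
    show "(\<lambda>(s,t). (p s, q t)) ` V = U"
    proof
      show "(\<lambda>(s,t). (p s, q t)) ` V \<subseteq> U" using mV by auto
      show "U \<subseteq> (\<lambda>(s,t). (p s, q t)) ` V"
      proof (clarify)
        fix u v assume uv: "(u,v) \<in> U"
        have "(P u, Q v) \<in> V" "p (P u) = u" "q (Q v) = v" using uv P3 Q3 unfolding U_def V_def by auto
        then show "(u,v) \<in> (\<lambda>(s,t). (p s, q t)) ` V" by force
      qed
    qed
  qed
  have e: "\<forall>(u,v)\<in>U. (P u, Q v) \<in> V \<and> p (P u) = u \<and> q (Q v) = v"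
    using P3 Q3 unfolding U_def V_def by auto
  have pc: "param_change V U (\<lambda>s t. p s) (\<lambda>s t. q t)"
    unfolding param_change_def using oV oU smp smq bij smP smQ e by blast
  have gp: "geometric_params V R.y Phi Psi (\<lambda>s t. nu (p s) (q t))"
    unfolding geometric_params_def
  proof (intro conjI exI[of _ 0] ballI)
    fix z assume z: "z \<in> V"
    obtain s t where zst: "z = (s,t)" by (cases z)
    have st: "(s,t) \<in> V" using z zst by simp
    have K: "\<bar>p s - u0\<bar> \<le> 2*d \<and> \<bar>q t - v0\<bar> \<le> 2*d" using UK mV st by blast
    have la: "ln (al s) = - Lm (p s) v0" unfolding al_def w1_def by (simp add: ln_inverse)
    have lb: "ln (be t) = - Mm u0 (q t)" unfolding be_def w2_def by (simp add: ln_inverse)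
    show "case z of (s,t) \<Rightarrow> lam R.y Phi (\<lambda>s t. nu (p s) (q t)) s t = 0"
      unfolding zst using R.lamy[OF st] la Lc[of "p s" "q t"] K by (simp add: Lm_def)
    show "case z of (s,t) \<Rightarrow> mu R.y Psi (\<lambda>s t. nu (p s) (q t)) s t = 0"
      unfolding zst using R.muy[OF st] lb Mc[of "p s" "q t"] K by (simp add: Mm_def)
  qed
  have u0U: "(u0,v0) \<in> U" unfolding U_def using d by auto
  show ?thesis
    apply (rule exI[of _ U], rule exI[of _ V], rule exI[of _ "\<lambda>s t. p s"], rule exI[of _ "\<lambda>s t. q t"])
    unfolding Let_def
    using u0U UD pc R.y_regular R.y_principal R.y_sr R.y_wd gp by simp
qed

end


theorem theorem4p4:
  fixes D :: "(real \<times> real) set" and x :: surf and I :: "real set"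
    and f g Phi Psi :: "real \<Rightarrow> real" and nu :: "real \<Rightarrow> real \<Rightarrow> real"
    and u0 v0 :: real
  assumes "regular_surface D x"
    and "principal_params D x"
    and "strongly_regular D x"
    and "weingarten_data D x I f g nu"
    and "\<forall>t\<in>I. (Phi has_real_derivative (deriv f t / (f t - g t))) (at t)"
    and "\<forall>t\<in>I. (Psi has_real_derivative (deriv g t / (g t - f t))) (at t)"
    and "(u0, v0) \<in> D"
  shows "\<exists>U V p q. (u0, v0) \<in> U \<and> U \<subseteq> D \<and> param_change V U p q \<and>
           (let y = (\<lambda>s t. x (p s t) (q s t)); nu' = (\<lambda>s t. nu (p s t) (q s t)) in
              regular_surface V y \<and> principal_params V y \<and> strongly_regular V y \<and>
              weingarten_data V y I f g nu' \<and> geometric_params V y Phi Psi nu')"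
proof -
  interpret W: wsurf D x I f g Phi Psi nu
    by (rule wsurf.intro[OF psurf.intro wsurf_axioms.intro]) (rule assms)+
  show ?thesis by (rule W.main[OF assms(7)])
qed

end
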